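(* Let $H$ be a Hilbert $C^*$-module and $Q\in\mathcal{L}(H)$ an idempotent. Then $s(I-Q)=I-s(Q^* )$. Furthermore, the following statements are equivalent: (i) $s(I-Q)=I-s(Q)$; (ii) $s(Q^* )=s(Q)$; (iii) $Q$ is a projection; (iv) $(s(Q),Q)$ is a quasi-projection pair.
   Context: $H$ is a Hilbert module over a $C^*$-algebra, $\mathcal{L}(H)$ the adjointable operators; projections are self-adjoint idempotents. For $T$, $|T|=(T^*T)^{1/2}$ and $T^\dagger$ is the Moore–Penrose inverse. For an idempotent $Q$, $P_{\mathcal{R}(Q)}$ is the projection onto $\mathcal{R}(Q)$, the matched projection is $m(Q)=\tfrac12(|Q^*|+Q^* )|Q^*|^\dagger(|Q^*|+I)^{-1}(|Q^*|+Q)$, and the supplementary projection is $s(Q)=m(2P_{\mathcal{R}(Q)}-Q)$. A quasi-projection pair is $(P,Q)$ with $P$ a projection, $Q$ an idempotent and $Q^*=(2P-I)Q(2P-I)$. *)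

theory Defs
  imports Complex_Main
begin

text \<open>The algebra of adjointable operators on a
Hilbert C*-module is a unital C*-algebra, and every unital C*-algebra A arises
this way (A is the algebra of adjointable operators on A viewed as a Hilbert
module over itself).  We therefore work in an arbitrary unital C*-algebra.\<close>

class cstar_algebra = real_normed_algebra_1 + banach +
  fixes scaleC :: "complex \<Rightarrow> 'a \<Rightarrow> 'a"
    and adj :: "'a \<Rightarrow> 'a"
  assumes scaleC_of_real: "scaleC (complex_of_real r) x = scaleR r x"
    and scaleC_add_right: "scaleC c (x + y) = scaleC c x + scaleC c y"
    and scaleC_add_left: "scaleC (c + d) x = scaleC c x + scaleC d x"
    and scaleC_scaleC: "scaleC c (scaleC d x) = scaleC (c * d) x"
    and scaleC_one: "scaleC 1 x = x"
    and scaleC_mult_left: "scaleC c (x * y) = scaleC c x * y"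
    and scaleC_mult_right: "scaleC c (x * y) = x * scaleC c y"
    and norm_scaleC: "norm (scaleC c x) = cmod c * norm x"
    and adj_adj: "adj (adj x) = x"
    and adj_add: "adj (x + y) = adj x + adj y"
    and adj_mult: "adj (x * y) = adj y * adj x"
    and adj_scaleC: "adj (scaleC c x) = scaleC (cnj c) (adj x)"
    and cstar_identity: "norm (adj x * x) = norm x ^ 2"

definition idempotent :: "'a::cstar_algebra \<Rightarrow> bool" where
  "idempotent q \<longleftrightarrow> q * q = q"

definition projection :: "'a::cstar_algebra \<Rightarrow> bool" where
  "projection p \<longleftrightarrow> adj p = p \<and> p * p = p"

definition positive :: "'a::cstar_algebra \<Rightarrow> bool" where
  "positive a \<longleftrightarrow> (\<exists>b. a = adj b * b)"

definition psqrt :: "'a::cstar_algebra \<Rightarrow> 'a" where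
  "psqrt a = (THE r. positive r \<and> r * r = a)"

definition absv :: "'a::cstar_algebra \<Rightarrow> 'a" where
  "absv t = psqrt (adj t * t)"

definition mp_inv :: "'a::cstar_algebra \<Rightarrow> 'a" where
  "mp_inv t = (THE x. t * x * t = t \<and> x * t * x = x \<and>
                      adj (t * x) = t * x \<and> adj (x * t) = x * t)"

definition cinv :: "'a::cstar_algebra \<Rightarrow> 'a" where
  "cinv a = (THE b. a * b = 1 \<and> b * a = 1)"

text \<open>Projection onto the range of an idempotent q: the projection p with
R(p) = R(q), i.e. p q = q (R(q) \<subseteq> R(p)) and q p = p (R(p) \<subseteq> R(q)).\<close>
definition range_proj :: "'a::cstar_algebra \<Rightarrow> 'a" where
  "range_proj q = (THE p. projection p \<and> p * q = q \<and> q * p = p)"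

definition matched :: "'a::cstar_algebra \<Rightarrow> 'a" where
  "matched q = scaleR (1/2) ((absv (adj q) + adj q) * mp_inv (absv (adj q))
       * cinv (absv (adj q) + 1) * (absv (adj q) + q))"

definition suppl :: "'a::cstar_algebra \<Rightarrow> 'a" where
  "suppl q = matched (2 * range_proj q - q)"

definition quasi_projection_pair :: "'a::cstar_algebra \<Rightarrow> 'a \<Rightarrow> bool" where
  "quasi_projection_pair p q \<longleftrightarrow> projection p \<and> idempotent q \<and>
      adj q = (2 * p - 1) * q * (2 * p - 1)"

end

theory Submission
  imports Defs "HOL-Analysis.Analysis" "HOL-Computational_Algebra.Formal_Power_Series"
begin

definition cs :: "complex \<Rightarrow> 'a::cstar_algebra" where "cs c = scaleC c 1"
definition inv_el :: "'a::cstar_algebra \<Rightarrow> bool" where "inv_el a \<longleftrightarrow> (\<exists>b. a*b = 1 \<and> b*a = 1)"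
definition spec :: "'a::cstar_algebra \<Rightarrow> complex set" where "spec a = {l. \<not> inv_el (cs l - a)}"
definition spos :: "'a::cstar_algebra \<Rightarrow> bool" where "spos a \<longleftrightarrow> (\<forall>l\<in>spec a. Im l = 0 \<and> 0 \<le> Re l)"

lemma scaleC_eq_cs: "scaleC c (x::'a::cstar_algebra) = cs c * x"
  using scaleC_mult_left[of c 1 x] by (simp add: cs_def)

lemma scaleC_eq_cs': "scaleC c (x::'a::cstar_algebra) = x * cs c"
  using scaleC_mult_right[of c x 1] by (simp add: cs_def)

lemma cs_comm: "cs c * (x::'a::cstar_algebra) = x * cs c"
  using scaleC_eq_cs[of c x] scaleC_eq_cs'[of c x] by (rule trans[OF sym])

lemma cs_comm2: "x * (cs c * (y::'a::cstar_algebra)) = cs c * (x * y)"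
  by (metis cs_comm mult.assoc)

lemma cs_mult: "cs (c * d) = (cs c * cs d :: 'a::cstar_algebra)"
  unfolding cs_def by (simp only: scaleC_scaleC[symmetric] scaleC_eq_cs[of c "scaleC d 1"] cs_def)

lemma cs_add: "cs (c + d) = (cs c + cs d :: 'a::cstar_algebra)"
  by (simp add: cs_def scaleC_add_left)

lemma cs_of_real: "cs (complex_of_real r) = (of_real r :: 'a::cstar_algebra)"
  unfolding cs_def scaleC_of_real by (simp add: of_real_def)

lemma cs_zero[simp]: "cs 0 = (0 :: 'a::cstar_algebra)"
  using cs_of_real[of 0] by simp

lemma cs_one[simp]: "cs 1 = (1 :: 'a::cstar_algebra)"
  using cs_of_real[of 1] by simp

lemma cs_uminus: "cs (- c) = (- cs c :: 'a::cstar_algebra)"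
proof -
  have "cs c + cs (-c) = (0::'a)" using cs_add[of c "-c"] by simp
  then show ?thesis by (rule minus_unique[THEN sym])
qed

lemma cs_diff: "cs (c - d) = (cs c - cs d :: 'a::cstar_algebra)"
  unfolding diff_conv_add_uminus cs_add cs_uminus ..

lemma cs_numeral: "cs (numeral n) = (numeral n :: 'a::cstar_algebra)"
  using cs_of_real[of "numeral n"] by simp

lemma norm_cs[simp]: "norm (cs c :: 'a::cstar_algebra) = cmod c"
  by (simp add: cs_def norm_scaleC)

lemma cs_power: "cs (c ^ n) = (cs c ^ n :: 'a::cstar_algebra)"
  by (induction n) (simp_all add: cs_mult)

lemma cs_sum: "cs (sum f A) = (sum (\<lambda>i. cs (f i)) A :: 'a::cstar_algebra)"
  by (induction A rule: infinite_finite_induct) (simp_all add: cs_add)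

lemma adj_zero[simp]: "adj 0 = (0::'a::cstar_algebra)"
  using adj_add[of "0::'a" 0] by simp

lemma adj_one[simp]: "adj 1 = (1::'a::cstar_algebra)"
proof -
  have "adj (1::'a) = adj 1 * 1" by simp
  also have "\<dots> = adj 1 * adj (adj 1)" by (simp add: adj_adj)
  also have "\<dots> = adj (adj 1 * 1)" by (simp only: adj_mult)
  also have "\<dots> = 1" by (simp add: adj_adj)
  finally show ?thesis .
qed

lemma adj_uminus[simp]: "adj (- x) = - adj (x::'a::cstar_algebra)"
proof -
  have "adj x + adj (-x) = 0" using adj_add[of x "-x"] by simp
  then show ?thesis by (rule minus_unique[THEN sym])
qed

lemma adj_diff[simp]: "adj (x - y) = adj x - adj (y::'a::cstar_algebra)"
  using adj_add[of x "-y"] by simp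

lemma adj_cs[simp]: "adj (cs c) = (cs (cnj c) :: 'a::cstar_algebra)"
  by (simp add: cs_def adj_scaleC)

lemma adj_of_real[simp]: "adj (of_real r) = (of_real r :: 'a::cstar_algebra)"
  by (metis adj_cs complex_cnj_complex_of_real cs_of_real)

lemma adj_numeral[simp]: "adj (numeral n) = (numeral n :: 'a::cstar_algebra)"
  by (metis adj_of_real of_real_numeral)

lemma adj_scaleR[simp]: "adj (scaleR r x) = scaleR r (adj x :: 'a::cstar_algebra)"
proof -
  have "adj (scaleR r x) = adj x * of_real r" by (simp add: scaleR_conv_of_real adj_mult)
  also have "\<dots> = scaleR r (adj x)" by (simp add: of_real_def)
  finally show ?thesis .
qed

lemma adj_power: "adj (x ^ n) = (adj x ^ n :: 'a::cstar_algebra)"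
  by (induction n) (simp_all add: adj_mult power_commutes)

lemma adj_sum: "adj (sum f A) = (sum (\<lambda>i. adj (f i)) A :: 'a::cstar_algebra)"
  by (induction A rule: infinite_finite_induct) (simp_all add: adj_add)

lemma norm_adj_le: "norm (x::'a::cstar_algebra) \<le> norm (adj x)"
proof (cases "x = 0")
  case True then show ?thesis by simp
next
  case False
  then have p: "norm x > 0" by simp
  have "norm x ^ 2 = norm (adj x * x)" by (simp add: cstar_identity)
  also have "\<dots> \<le> norm (adj x) * norm x" by (rule norm_mult_ineq)
  finally have "norm x * norm x \<le> norm (adj x) * norm x" by (simp add: power2_eq_square)
  then show ?thesis using p by simp
qed

lemma norm_adj[simp]: "norm (adj x) = norm (x::'a::cstar_algebra)"
  by (metis adj_adj antisym norm_adj_le)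

lemma cstar_identity': "norm (x * adj x) = norm (x::'a::cstar_algebra) ^ 2"
  using cstar_identity[of "adj x"] by (simp add: adj_adj)

lemma cstar_zero: "adj x * x = 0 \<Longrightarrow> x = (0::'a::cstar_algebra)"
  using cstar_identity[of x] by simp

lemma cstar_zero': "x * adj x = 0 \<Longrightarrow> x = (0::'a::cstar_algebra)"
  using cstar_identity'[of x] by simp

lemma bounded_linear_adj: "bounded_linear (adj :: 'a::cstar_algebra \<Rightarrow> 'a)"
  by (rule bounded_linear_intro[where K=1]) (simp_all add: adj_add)

lemma inv_unique: "a * b = 1 \<Longrightarrow> c * a = 1 \<Longrightarrow> b = (c::'a::cstar_algebra)"
  by (metis mult.assoc mult_1_left mult_1_right)

lemma cinv_eq: "a * b = 1 \<Longrightarrow> b * a = 1 \<Longrightarrow> cinv a = (b::'a::cstar_algebra)"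
  unfolding cinv_def by (rule the_equality) (auto intro: inv_unique)

lemma inv_elI: "a * b = 1 \<Longrightarrow> b * a = 1 \<Longrightarrow> inv_el (a::'a::cstar_algebra)"
  unfolding inv_el_def by blast

lemma cinv_right: "inv_el a \<Longrightarrow> a * cinv a = (1::'a::cstar_algebra)"
  unfolding inv_el_def using cinv_eq by metis

lemma cinv_left: "inv_el a \<Longrightarrow> cinv a * a = (1::'a::cstar_algebra)"
  unfolding inv_el_def using cinv_eq by metis

lemma inv_el_cinv: "inv_el a \<Longrightarrow> inv_el (cinv (a::'a::cstar_algebra))"
  by (meson cinv_left cinv_right inv_elI)

lemma cinv_cinv: "inv_el a \<Longrightarrow> cinv (cinv (a::'a::cstar_algebra)) = a"
  by (simp add: cinv_eq cinv_left cinv_right)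

lemma inv_el_one[simp]: "inv_el (1::'a::cstar_algebra)"
  by (rule inv_elI[of 1 1]) simp_all

lemma cinv_one[simp]: "cinv (1::'a::cstar_algebra) = 1"
  by (rule cinv_eq) simp_all

lemma inv_el_mult: "inv_el a \<Longrightarrow> inv_el b \<Longrightarrow> inv_el (a * (b::'a::cstar_algebra))"
  apply (rule inv_elI[of _ "cinv b * cinv a"])
  apply (metis cinv_right mult.assoc mult_1_right)
  by (metis cinv_left mult.assoc mult_1_left)

lemma cinv_mult: "inv_el a \<Longrightarrow> inv_el b \<Longrightarrow> cinv (a * (b::'a::cstar_algebra)) = cinv b * cinv a"
  apply (rule cinv_eq)
  apply (metis cinv_right mult.assoc mult_1_right)
  by (metis cinv_left mult.assoc mult_1_left)

lemma left_right_inv: "l * a = 1 \<Longrightarrow> a * r = 1 \<Longrightarrow> inv_el (a::'a::cstar_algebra)"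
  by (metis inv_elI inv_unique)

lemma inv_el_comm_factors:
  fixes a b :: "'a::cstar_algebra"
  assumes "a * b = b * a" "inv_el (a * b)"
  shows "inv_el a" "inv_el b"
proof -
  let ?c = "cinv (a * b)"
  have r: "a * b * ?c = 1" and l: "?c * (a * b) = 1" using assms cinv_right cinv_left by auto
  show "inv_el a"
    apply (rule left_right_inv[of "?c * b" _ "b * ?c"])
    using l assms(1) apply (metis mult.assoc)
    using r by (metis mult.assoc)
  show "inv_el b"
    apply (rule left_right_inv[of "?c * a" _ "a * ?c"])
    using l apply (metis mult.assoc)
    using r assms(1) by (metis mult.assoc)
qed

lemma cinv_comm: "inv_el a \<Longrightarrow> a * x = x * a \<Longrightarrow> cinv a * x = x * (cinv a::'a::cstar_algebra)"
proof -
  assume i: "inv_el a" and c: "a * x = x * a"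
  have "cinv a * x = cinv a * x * (a * cinv a)" using cinv_right[OF i] by simp
  also have "\<dots> = cinv a * (x * a) * cinv a" by (simp add: mult.assoc)
  also have "\<dots> = cinv a * (a * x) * cinv a" using c by simp
  also have "\<dots> = x * cinv a" using cinv_left[OF i] by (simp add: mult.assoc[symmetric])
  finally show ?thesis .
qed

lemma inv_el_adj: "inv_el a \<Longrightarrow> inv_el (adj (a::'a::cstar_algebra))"
  by (metis adj_mult adj_one cinv_left cinv_right inv_elI)

lemma cinv_adj: "inv_el a \<Longrightarrow> cinv (adj (a::'a::cstar_algebra)) = adj (cinv a)"
  by (metis adj_mult adj_one cinv_eq cinv_left cinv_right)

lemma inv_el_uminus: "inv_el a \<Longrightarrow> inv_el (- (a::'a::cstar_algebra))"
  by (metis cinv_left cinv_right inv_elI minus_mult_minus)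

lemma inv_el_uminus_iff: "inv_el (- a) \<longleftrightarrow> inv_el (a::'a::cstar_algebra)"
  by (metis inv_el_uminus minus_minus)

lemma inv_el_cs: "c \<noteq> 0 \<Longrightarrow> inv_el (cs c :: 'a::cstar_algebra)"
  by (rule inv_elI[of _ "cs (inverse c)"]) (simp_all flip: cs_mult)

lemma cinv_cs: "c \<noteq> 0 \<Longrightarrow> cinv (cs c :: 'a::cstar_algebra) = cs (inverse c)"
  by (rule cinv_eq) (simp_all flip: cs_mult)

lemma neumann:
  fixes x :: "'a::cstar_algebra"
  assumes "norm x < 1"
  shows "inv_el (1 - x) \<and> norm (cinv (1 - x)) \<le> 1 / (1 - norm x)"
proof -
  have nb: "norm (x ^ n) \<le> norm x ^ n" for n by (rule norm_power_ineq)
  have sg: "summable (\<lambda>n. norm x ^ n)" using assms by (simp add: summable_geometric)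
  have sn: "summable (\<lambda>n. norm (x ^ n))"
    by (rule summable_comparison_test'[OF sg, of 0]) (simp add: nb)
  then have s: "summable (\<lambda>n. x ^ n)" by (rule summable_norm_cancel)
  define s where "s = (\<Sum>n. x ^ n)"
  have x0: "(\<lambda>n. x ^ n) \<longlonglongrightarrow> 0"
    by (rule summable_LIMSEQ_zero[OF s])
  have tel: "(\<lambda>n. x ^ n - x ^ Suc n) sums (x ^ 0 - 0)"
    by (rule telescope_sums'[OF x0])
  have "(\<lambda>n. (1 - x) * x ^ n) sums ((1 - x) * s)"
    unfolding s_def by (rule sums_mult[OF summable_sums[OF s]])
  moreover have "(\<lambda>n. (1 - x) * x ^ n) = (\<lambda>n. x ^ n - x ^ Suc n)"
    by (simp add: algebra_simps)
  ultimately have r: "(1 - x) * s = 1" using tel sums_unique2 by fastforce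
  have "(\<lambda>n. x ^ n * (1 - x)) sums (s * (1 - x))"
    unfolding s_def by (rule sums_mult2[OF summable_sums[OF s]])
  moreover have "(\<lambda>n. x ^ n * (1 - x)) = (\<lambda>n. x ^ n - x ^ Suc n)"
    by (simp add: algebra_simps power_commutes)
  ultimately have l: "s * (1 - x) = 1" using tel sums_unique2 by fastforce
  have ci: "cinv (1 - x) = s" using r l by (rule cinv_eq)
  have "norm s \<le> (\<Sum>n. norm (x ^ n))" unfolding s_def by (rule summable_norm[OF sn])
  also have "\<dots> \<le> (\<Sum>n. norm x ^ n)" by (rule suminf_le[OF nb sn sg])
  also have "\<dots> = 1 / (1 - norm x)" using assms by (simp add: suminf_geometric)
  finally show ?thesis using r l ci inv_elI by metis
qed

lemma perturb:
  fixes a b :: "'a::cstar_algebra"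
  assumes i: "inv_el a" and n: "norm (cinv a) * norm (b - a) \<le> 1/2"
  shows "inv_el b \<and> norm (cinv b) \<le> 2 * norm (cinv a)"
proof -
  define y where "y = cinv a * (a - b)"
  have ny: "norm y \<le> 1/2"
    unfolding y_def using n norm_mult_ineq[of "cinv a" "a - b"] by (simp add: norm_minus_commute)
  then have ny1: "norm y < 1" by simp
  have b: "b = a * (1 - y)"
    unfolding y_def by (simp add: algebra_simps cinv_right[OF i] mult.assoc[symmetric])
  from neumann[OF ny1] have i1: "inv_el (1 - y)" and n1: "norm (cinv (1 - y)) \<le> 1 / (1 - norm y)" by auto
  have ib: "inv_el b" using b i i1 inv_el_mult by metis
  have "cinv b = cinv (1 - y) * cinv a" using b cinv_mult[OF i i1] by simp
  then have "norm (cinv b) \<le> norm (cinv (1 - y)) * norm (cinv a)" by (simp add: norm_mult_ineq)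
  also have "\<dots> \<le> 2 * norm (cinv a)"
  proof -
    have "1 / (1 - norm y) \<le> 2" using ny by (simp add: field_simps)
    then have "norm (cinv (1 - y)) \<le> 2" using n1 by linarith
    then show ?thesis by (simp add: mult_right_mono)
  qed
  finally show ?thesis using ib by simp
qed

lemma cinv_diff:
  fixes a b :: "'a::cstar_algebra"
  assumes "inv_el a" "inv_el b"
  shows "cinv a - cinv b = cinv a * (b - a) * cinv b"
  using assms by (simp add: algebra_simps cinv_right cinv_left mult.assoc)

lemma spec_bound: "l \<in> spec a \<Longrightarrow> cmod l \<le> norm (a::'a::cstar_algebra)"
proof (rule ccontr)
  assume l: "l \<in> spec a" and "\<not> cmod l \<le> norm a"
  then have lt: "norm a < cmod l" by simp
  then have l0: "l \<noteq> 0" by auto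
  have "norm (cs (inverse l) * a) \<le> norm a / cmod l"
    using norm_mult_ineq[of "cs (inverse l)" a] by (simp add: norm_inverse divide_inverse mult.commute)
  also have "\<dots> < 1" using lt l0 by simp
  finally have "inv_el (1 - cs (inverse l) * a)" using neumann by blast
  moreover have "cs l - a = cs l * (1 - cs (inverse l) * a)"
    using l0 by (simp add: algebra_simps mult.assoc[symmetric] flip: cs_mult)
  ultimately have "inv_el (cs l - a)" using inv_el_mult inv_el_cs l0 by metis
  then show False using l by (simp add: spec_def)
qed

lemma spec_shift: "l \<in> spec (a + cs c) \<longleftrightarrow> l - c \<in> spec (a::'a::cstar_algebra)"
  by (simp add: spec_def cs_diff algebra_simps)

lemma spec_uminus: "l \<in> spec (- a) \<longleftrightarrow> - l \<in> spec (a::'a::cstar_algebra)"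
proof -
  have "cs l - (- a) = - (cs (- l) - a)" by (simp add: cs_uminus)
  then show ?thesis unfolding spec_def by (simp only: mem_Collect_eq inv_el_uminus_iff)
qed

lemma sa_spec_real:
  fixes h :: "'a::cstar_algebra"
  assumes sa: "adj h = h" and l: "l \<in> spec h"
  shows "Im l = 0"
proof (rule ccontr)
  assume b0: "Im l \<noteq> 0"
  define b where "b = Im l"
  define t where "t = (norm h ^ 2 + 1) / (2 * b)"
  have "l + \<i> * complex_of_real t \<in> spec (h + cs (\<i> * complex_of_real t))"
    using l by (simp add: spec_shift)
  then have le: "cmod (l + \<i> * complex_of_real t) \<le> norm (h + cs (\<i> * complex_of_real t))"
    by (rule spec_bound)
  have "adj (h + cs (\<i> * complex_of_real t)) = h + cs (- \<i> * complex_of_real t)"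
    by (simp add: adj_add sa)
  then have "norm (h + cs (\<i> * complex_of_real t)) ^ 2
      = norm ((h + cs (- \<i> * complex_of_real t)) * (h + cs (\<i> * complex_of_real t)))"
    by (metis cstar_identity)
  also have "(h + cs (- \<i> * complex_of_real t)) * (h + cs (\<i> * complex_of_real t)) = h * h + of_real (t^2)"
  proof -
    have "cs (- \<i> * complex_of_real t) * cs (\<i> * complex_of_real t) = (of_real (t^2) :: 'a)"
    proof -
      have e: "(- \<i> * complex_of_real t) * (\<i> * complex_of_real t) = complex_of_real (t^2)"
        by (simp add: complex_eq_iff power2_eq_square)
      show ?thesis unfolding cs_mult[symmetric] e cs_of_real ..
    qed
    moreover have "cs (- \<i> * complex_of_real t) * h + h * cs (\<i> * complex_of_real t) = (0::'a)"
      by (simp add: cs_uminus cs_comm)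
    ultimately show ?thesis by (simp add: algebra_simps)
  qed
  also have "norm (h * h + of_real (t^2)) \<le> norm h ^ 2 + t ^ 2"
  proof -
    have n1: "norm (of_real (t^2) :: 'a) = t^2" by (simp only: norm_of_real) simp
    have "norm (h * h + of_real (t^2)) \<le> norm (h * h) + norm (of_real (t^2) :: 'a)"
      by (rule norm_triangle_ineq)
    also have "\<dots> \<le> norm h ^ 2 + t^2" unfolding n1 using norm_mult_ineq[of h h]
      by (simp add: power2_eq_square)
    finally show ?thesis .
  qed
  finally have A: "norm (h + cs (\<i> * complex_of_real t)) ^ 2 \<le> norm h ^ 2 + t ^ 2" .
  have "cmod (l + \<i> * complex_of_real t) ^ 2 = (Re l)^2 + (b + t)^2"
    by (simp add: cmod_power2 b_def)
  then have "(Re l)^2 + (b + t)^2 \<le> norm h ^ 2 + t ^ 2"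
    using le A by (metis norm_ge_zero power_mono order_trans)
  then have "2 * b * t \<le> norm h ^ 2" by (simp add: power2_eq_square algebra_simps) (smt (verit) zero_le_power2 power2_eq_square)
  moreover have "2 * b * t = norm h ^ 2 + 1" using b0 by (simp add: t_def b_def)
  ultimately show False by simp
qed

lemma spos_square:
  fixes y :: "'a::cstar_algebra"
  assumes sa: "adj y = y"
  shows "spos (y * y)"
  unfolding spos_def
proof
  fix l assume l: "l \<in> spec (y * y)"
  define m where "m = csqrt l"
  have mm: "m * m = l" unfolding m_def by (metis power2_csqrt power2_eq_square)
  have cm: "cs m * y = y * cs m" by (rule cs_comm)
  have ll: "cs l = cs m * (cs m :: 'a)" unfolding mm[symmetric] by (rule cs_mult)
  have f1: "cs l - y * y = (cs m - y) * (cs m + y)"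
    unfolding ll by (simp add: algebra_simps cm)
  have ni: "\<not> inv_el (cs l - y * y)" using l by (simp add: spec_def)
  have "\<not> inv_el (cs m - y) \<or> \<not> inv_el (cs m + y)"
    using ni f1 inv_el_mult by metis
  moreover have "cs m + y = - (cs (- m) - y)" by (simp add: cs_uminus)
  ultimately have "m \<in> spec y \<or> - m \<in> spec y"
    unfolding spec_def mem_Collect_eq by (metis inv_el_uminus_iff)
  then have "Im m = 0" using sa_spec_real[OF sa, of m] sa_spec_real[OF sa, of "-m"] by auto
  then have "l = complex_of_real ((Re m)^2)" using mm
    by (simp add: complex_eq_iff power2_eq_square)
  then show "Im l = 0 \<and> 0 \<le> Re l" by simp
qed

lemma geo_sum1:
  fixes u :: "'a::ring_1"
  shows "(1 - u) * (\<Sum>l<m. u^l) = 1 - u^m"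
proof (induction m)
  case 0 show ?case by simp
next
  case (Suc m)
  have "(1 - u) * (\<Sum>l<Suc m. u^l) = (1 - u) * (\<Sum>l<m. u^l) + (1 - u) * u^m" by (simp add: distrib_left)
  also have "\<dots> = (1 - u^m) + (u^m - u^Suc m)" unfolding Suc by (simp add: algebra_simps power_Suc)
  finally show ?case by simp
qed

lemma geo_sum2:
  fixes u :: "'a::ring_1"
  shows "(\<Sum>l<m. u^l) * (1 - u) = 1 - u^m"
proof (induction m)
  case 0 show ?case by simp
next
  case (Suc m)
  have "(\<Sum>l<Suc m. u^l) * (1 - u) = (\<Sum>l<m. u^l) * (1 - u) + u^m * (1 - u)" by (simp add: distrib_right)
  also have "\<dots> = (1 - u^m) + (u^m - u^Suc m)" unfolding Suc by (simp add: algebra_simps power_Suc2 power_commutes)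
  finally show ?case by simp
qed

lemmas geo_sum = geo_sum1 geo_sum2

lemma cs_mult_power: "(cs c * h) ^ n = cs (c ^ n) * (h::'a::cstar_algebra) ^ n"
proof (induction n)
  case 0 show ?case by simp
next
  case (Suc n)
  have "(cs c * h) ^ Suc n = cs c * h * (cs (c ^ n) * h ^ n)" by (simp add: Suc power_Suc)
  also have "\<dots> = cs c * cs (c ^ n) * (h * h ^ n)" by (simp add: cs_comm2[of h] mult.assoc)
  also have "\<dots> = cs (c ^ Suc n) * h ^ Suc n" by (simp add: cs_mult)
  finally show ?case .
qed

lemma rou_ne1:
  assumes "0 < l" "l < m"
  shows "cis (2 * pi / real m) ^ l \<noteq> 1"
proof
  assume a: "cis (2 * pi / real m) ^ l = 1"
  have "cis (2 * pi / real m) ^ l = cis (real l * (2 * pi / real m))" by (rule Complex.DeMoivre)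
  then have "cos (real l * (2 * pi / real m)) = 1" using a by (metis Complex.cis.sel(1) one_complex.sel(1))
  then obtain n :: int where n: "real l * (2 * pi / real m) = real_of_int n * 2 * pi" using cos_one_2pi_int by blast
  have m0: "real m > 0" using assms by simp
  then have "real l = n * real m" using n by (simp add: field_simps)
  then have "real l = real_of_int n * real m" by simp
  moreover have "0 < real l" "real l < real m" using assms by auto
  ultimately have "0 < real_of_int n" "real_of_int n < 1" using m0
    by (auto simp: zero_less_mult_iff)
  then have "0 < n \<and> n < 1" by simp
  then show False by linarith
qed

lemma rou_pow_m: "m > 0 \<Longrightarrow> (cis (2 * pi / real m) ^ j) ^ m = 1"
proof -
  assume "m > 0"
  have "(cis (2 * pi / real m) ^ j) ^ m = (cis (2 * pi / real m) ^ m) ^ j" by (simp add: power_mult[symmetric] mult.commute)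
  also have "cis (2 * pi / real m) ^ m = cis (real m * (2 * pi / real m))" by (rule Complex.DeMoivre)
  also have "real m * (2 * pi / real m) = 2 * pi" using \<open>m > 0\<close> by simp
  finally show ?thesis by simp
qed

lemma rou_sum:
  assumes "m > 0" "l < m"
  shows "(\<Sum>j<m. (cis (2 * pi / real m) ^ j) ^ l) = (if l = 0 then of_nat m else 0)"
proof (cases "l = 0")
  case True then show ?thesis by simp
next
  case False
  define w where "w = cis (2 * pi / real m) ^ l"
  have w1: "w \<noteq> 1" unfolding w_def using rou_ne1 assms False by simp
  have "(\<Sum>j<m. (cis (2 * pi / real m) ^ j) ^ l) = (\<Sum>j<m. w ^ j)"
    unfolding w_def by (simp add: power_mult[symmetric] mult.commute)
  also have "\<dots> = (1 - w ^ m) / (1 - w)" using w1 by (simp add: sum_gp_strict)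
  also have "w ^ m = 1" unfolding w_def using rou_pow_m[OF assms(1), of l] by (simp add: power_mult[symmetric] mult.commute)
  finally show ?thesis using False by simp
qed

lemma averaging:
  fixes h :: "'a::cstar_algebra" and z :: complex
  assumes m0: "m > 0"
    and inv: "\<And>j. j < m \<Longrightarrow> inv_el (1 - cs (cis (2 * pi / real m) ^ j * z) * h)"
  shows "inv_el (1 - cs (z ^ m) * h ^ m) \<and>
         cinv (1 - cs (z ^ m) * h ^ m) = cs (1 / of_nat m) * (\<Sum>j<m. cinv (1 - cs (cis (2 * pi / real m) ^ j * z) * h))"
proof -
  define w where "w = cis (2 * pi / real m)"
  define u where "u = (\<lambda>j. cs (w ^ j * z) * h)"
  define X where "X = 1 - cs (z ^ m) * h ^ m"
  define g where "g = (\<Sum>j<m. cinv (1 - u j))"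
  have um: "u j ^ m = cs (z ^ m) * h ^ m" for j
    unfolding u_def cs_mult_power using rou_pow_m[OF m0, of j] by (simp add: power_mult_distrib w_def)
  have ul: "u j ^ l = cs ((w ^ j) ^ l * z ^ l) * h ^ l" for j l
    unfolding u_def cs_mult_power by (simp add: power_mult_distrib)
  have iu: "inv_el (1 - u j)" if "j < m" for j using inv[OF that] by (simp add: u_def w_def)
  have r1: "X * cinv (1 - u j) = (\<Sum>l<m. u j ^ l)" if "j < m" for j
  proof -
    have "X = (\<Sum>l<m. u j ^ l) * (1 - u j)" unfolding X_def geo_sum(2) um ..
    then show ?thesis using cinv_right[OF iu[OF that]] by (simp add: mult.assoc)
  qed
  have r2: "cinv (1 - u j) * X = (\<Sum>l<m. u j ^ l)" if "j < m" for j
  proof -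
    have "X = (1 - u j) * (\<Sum>l<m. u j ^ l)" unfolding X_def geo_sum(1) um ..
    then show ?thesis using cinv_left[OF iu[OF that]] by (simp add: mult.assoc[symmetric])
  qed
  have S: "(\<Sum>j<m. \<Sum>l<m. u j ^ l) = of_nat m"
  proof -
    have "(\<Sum>j<m. \<Sum>l<m. u j ^ l) = (\<Sum>l<m. \<Sum>j<m. cs ((w ^ j) ^ l * z ^ l) * h ^ l)"
      unfolding ul by (rule sum.swap)
    also have "\<dots> = (\<Sum>l<m. cs ((\<Sum>j<m. (w ^ j) ^ l) * z ^ l) * h ^ l)"
      by (simp add: sum_distrib_left sum_distrib_right cs_sum)
    also have "\<dots> = (\<Sum>l<m. if l = 0 then (of_nat m :: 'a) else 0)"
    proof (rule sum.cong[OF refl])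
      fix l assume "l \<in> {..<m}"
      then have "(\<Sum>j<m. (w ^ j) ^ l) = (if l = 0 then of_nat m else 0)"
        unfolding w_def using rou_sum[OF m0] by simp
      then show "cs ((\<Sum>j<m. (w ^ j) ^ l) * z ^ l) * h ^ l = (if l = 0 then (of_nat m :: 'a) else 0)"
        using cs_of_real[of "real m"] by auto
    qed
    also have "\<dots> = of_nat m" using m0 by simp
    finally show ?thesis .
  qed
  have Xg: "X * g = of_nat m"
    unfolding g_def sum_distrib_left using r1 S by simp
  have gX: "g * X = of_nat m"
    unfolding g_def sum_distrib_right using r2 S by simp
  have csm: "cs (of_nat m) = (of_nat m :: 'a)" using cs_of_real[of "real m"] by simp
  have cm: "cs (1 / of_nat m) * (of_nat m :: 'a) = 1"
  proof -
    have "cs (1 / of_nat m) * (of_nat m :: 'a) = cs (1 / of_nat m * of_nat m)" unfolding cs_mult csm ..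
    also have "1 / of_nat m * of_nat m = (1::complex)" using m0 by simp
    finally show ?thesis by simp
  qed
  have cm': "(of_nat m :: 'a) * cs (1 / of_nat m) = 1"
    using cm by (metis cs_comm)
  have a: "X * (cs (1 / of_nat m) * g) = 1"
    using Xg cm by (metis cs_comm2)
  have b: "(cs (1 / of_nat m) * g) * X = 1"
    using gX cm by (simp add: mult.assoc)
  have "inv_el X" using a b by (rule inv_elI)
  moreover have "cinv X = cs (1 / of_nat m) * g" using a b by (rule cinv_eq)
  ultimately show ?thesis unfolding X_def g_def u_def w_def by simp
qed


lemma norm_cs_mult: "norm (cs c * x) = cmod c * norm (x::'a::cstar_algebra)"
  by (metis norm_scaleC scaleC_eq_cs)

lemma norm_mult3: "norm (x * y * z) \<le> norm x * norm y * norm (z::'a::cstar_algebra)"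
proof -
  have "norm (x * y * z) \<le> norm (x * y) * norm z" by (rule norm_mult_ineq)
  also have "\<dots> \<le> norm x * norm y * norm z" by (rule mult_right_mono[OF norm_mult_ineq norm_ge_zero])
  finally show ?thesis .
qed

lemma sa_pow2_norm:
  fixes h :: "'a::cstar_algebra"
  assumes sa: "adj h = h"
  shows "norm (h ^ (2 ^ n)) = norm h ^ (2 ^ n)"
proof (induction n)
  case 0 show ?case by simp
next
  case (Suc n)
  have e: "h ^ (2 ^ Suc n) = adj (h ^ (2 ^ n)) * h ^ (2 ^ n)"
    by (simp add: adj_power sa power_add[symmetric] mult_2)
  have "norm (h ^ (2 ^ Suc n)) = norm (h ^ (2 ^ n)) ^ 2" unfolding e by (rule cstar_identity)
  also have "\<dots> = norm h ^ (2 ^ Suc n)" unfolding Suc by (simp add: power_mult[symmetric] mult.commute)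
  finally show ?case .
qed

lemma resolvent_local:
  fixes h :: "'a::cstar_algebra"
  assumes ix: "inv_el (1 - cs x * h)"
    and small: "cmod (y - x) * (norm h * norm (cinv (1 - cs x * h))) \<le> 1/2"
  shows "inv_el (1 - cs y * h) \<and> norm (cinv (1 - cs y * h)) \<le> 2 * norm (cinv (1 - cs x * h))
     \<and> norm (cinv (1 - cs y * h) - cinv (1 - cs x * h))
          \<le> 2 * norm (cinv (1 - cs x * h)) ^ 2 * norm h * cmod (y - x)"
proof -
  define a where "a = 1 - cs x * h"
  define b where "b = 1 - cs y * h"
  define B where "B = norm (cinv a)"
  have ba: "b - a = cs (x - y) * h" unfolding a_def b_def by (simp add: cs_diff algebra_simps)
  have nba: "norm (b - a) = cmod (y - x) * norm h" unfolding ba norm_cs_mult by (simp add: norm_minus_commute)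
  have "norm (cinv a) * norm (b - a) \<le> 1/2" unfolding nba using small by (simp add: a_def mult_ac)
  from perturb[OF ix[folded a_def] this] have ib: "inv_el b" and nb: "norm (cinv b) \<le> 2 * B"
    unfolding B_def by auto
  have "cinv b - cinv a = cinv b * (a - b) * cinv a" using cinv_diff[OF ib ix[folded a_def]] .
  then have "norm (cinv b - cinv a) \<le> norm (cinv b) * norm (a - b) * norm (cinv a)"
    using norm_mult3 by metis
  also have "\<dots> \<le> (2 * B) * (cmod (y - x) * norm h) * B"
  proof -
    have "norm (a - b) = cmod (y - x) * norm h" using nba by (simp add: norm_minus_commute)
    then show ?thesis using nb unfolding B_def by (intro mult_mono) auto
  qed
  also have "\<dots> = 2 * B ^ 2 * norm h * cmod (y - x)" by (simp add: power2_eq_square mult_ac)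
  finally show ?thesis using ib nb unfolding a_def b_def B_def by simp
qed

lemma resolvent_bound:
  fixes h :: "'a::cstar_algebra"
  assumes inv: "\<And>z. cmod z \<le> 1 \<Longrightarrow> inv_el (1 - cs z * h)"
  shows "\<exists>M>0. \<forall>z. cmod z \<le> 1 \<longrightarrow> norm (cinv (1 - cs z * h)) \<le> M"
proof -
  define f where "f = (\<lambda>z. cinv (1 - cs z * h))"
  have "continuous_on (cball 0 1) f"
    unfolding continuous_on_iff
  proof (intro ballI allI impI)
    fix x e assume x: "x \<in> cball (0::complex) 1" and e: "(e::real) > 0"
    define B where "B = norm (f x)"
    define K where "K = (norm h + 1) * (B + 1)"
    have K1: "K \<ge> 1"
    proof -
      have "1 * 1 \<le> (norm h + 1) * (B + 1)" by (intro mult_mono) (auto simp: B_def)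
      then show ?thesis unfolding K_def by simp
    qed
    have hB: "norm h * B \<le> K" unfolding K_def B_def by (simp add: mult_mono)
    have hB2: "2 * B ^ 2 * norm h \<le> 2 * K * K"
    proof -
      have "B ^ 2 * norm h \<le> (B + 1) ^ 2 * (norm h + 1)"
        by (intro mult_mono power_mono) (auto simp: B_def)
      also have "\<dots> = (B + 1) ^ 2 * (norm h + 1) * 1" by simp
      also have "\<dots> \<le> (B + 1) ^ 2 * (norm h + 1) * (norm h + 1)"
        by (intro mult_left_mono) (auto simp: B_def)
      also have "\<dots> = K * K" unfolding K_def by (simp add: power2_eq_square mult_ac)
      finally show ?thesis by simp
    qed
    define d where "d = min (1 / (2 * K)) (e / (2 * K * K))"
    have d0: "d > 0" unfolding d_def using K1 e by simp
    show "\<exists>d>0. \<forall>x'\<in>cball 0 1. dist x' x < d \<longrightarrow> dist (f x') (f x) < e"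
    proof (intro exI conjI ballI impI, fact d0)
      fix y assume y: "y \<in> cball (0::complex) 1" and dy: "dist y x < d"
      have ix: "inv_el (1 - cs x * h)" using x inv by simp
      have cy: "cmod (y - x) < d" using dy by (simp add: dist_norm)
      have "cmod (y - x) * (norm h * B) \<le> d * K"
        using cy hB d0 by (intro mult_mono) (auto simp: B_def)
      also have "\<dots> \<le> 1 / (2 * K) * K" unfolding d_def using K1 by (intro mult_right_mono) auto
      also have "\<dots> = 1/2" using K1 by simp
      finally have sm: "cmod (y - x) * (norm h * norm (cinv (1 - cs x * h))) \<le> 1/2"
        unfolding B_def f_def .
      from resolvent_local[OF ix sm]
      have "norm (f y - f x) \<le> 2 * B ^ 2 * norm h * cmod (y - x)" unfolding f_def B_def by simp
      also have "\<dots> \<le> 2 * K * K * cmod (y - x)" using hB2 by (simp add: mult_right_mono)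
      also have "\<dots> < 2 * K * K * d" using cy K1 by simp
      also have "\<dots> \<le> 2 * K * K * (e / (2 * K * K))"
        unfolding d_def using K1 by (intro mult_left_mono) auto
      also have "\<dots> = e" using K1 by simp
      finally show "dist (f y) (f x) < e" by (simp add: dist_norm)
    qed
  qed
  then have "compact (f ` cball 0 1)" by (rule compact_continuous_image[OF _ compact_cball])
  then have "bounded (f ` cball 0 1)" by (rule compact_imp_bounded)
  then obtain M where M: "M > 0" "\<forall>y\<in>f ` cball 0 1. norm y \<le> M" unfolding bounded_pos by blast
  show ?thesis
    using M by (intro exI[of _ M]) (auto simp: f_def)
qed

lemma cis_bound: "cmod (1 - cis t) \<le> 2 * \<bar>t\<bar>"
proof -
  have "cmod (1 - cis t) \<le> \<bar>Re (1 - cis t)\<bar> + \<bar>Im (1 - cis t)\<bar>" by (rule cmod_le)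
  also have "\<dots> = \<bar>1 - cos t\<bar> + \<bar>sin t\<bar>" by simp
  also have "\<bar>1 - cos t\<bar> \<le> \<bar>t\<bar>"
  proof -
    have c: "cos t = 1 - 2 * sin (t/2) ^ 2" using cos_double_sin[of "t/2"] by simp
    have "\<bar>1 - cos t\<bar> = 2 * sin (t/2) ^ 2" unfolding c by simp
    also have "\<dots> \<le> 2 * \<bar>sin (t/2)\<bar>"
    proof -
      have "sin (t/2) ^ 2 = \<bar>sin (t/2)\<bar> * \<bar>sin (t/2)\<bar>" by (metis abs_mult_self_eq power2_eq_square)
      also have "\<dots> \<le> \<bar>sin (t/2)\<bar> * 1" by (intro mult_left_mono) auto
      finally have "sin (t/2) ^ 2 \<le> \<bar>sin (t/2)\<bar>" by simp
      then show ?thesis by simp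
    qed
    also have "\<dots> \<le> 2 * \<bar>t/2\<bar>" using abs_sin_x_le_abs_x[of "t/2"] by simp
    finally show ?thesis by simp
  qed
  moreover have "\<bar>sin t\<bar> \<le> \<bar>t\<bar>" by (rule abs_sin_x_le_abs_x)
  ultimately show ?thesis by simp
qed

lemma SR:
  fixes h :: "'a::cstar_algebra"
  assumes sa: "adj h = h"
    and inv: "\<And>z. cmod z \<le> 1 \<Longrightarrow> inv_el (1 - cs z * h)"
  shows "norm h < 1"
proof (rule ccontr)
  assume "\<not> norm h < 1"
  then have h1: "norm h \<ge> 1" by simp
  define f where "f = (\<lambda>z. cinv (1 - cs z * h))"
  obtain M where M0: "M > 0" and M: "\<And>z. cmod z \<le> 1 \<Longrightarrow> norm (f z) \<le> M"
    using resolvent_bound[OF inv] unfolding f_def by blast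
  define L where "L = M * M * norm h"
  have L0: "L > 0" unfolding L_def using M0 h1 by (intro mult_pos_pos) auto
  have lip: "norm (f z - f w) \<le> L * cmod (z - w)" if "cmod z \<le> 1" "cmod w \<le> 1" for z w
  proof -
    have "f z - f w = f z * ((1 - cs w * h) - (1 - cs z * h)) * f w"
      unfolding f_def using cinv_diff[OF inv[OF that(1)] inv[OF that(2)]] .
    also have "(1 - cs w * h) - (1 - cs z * h) = cs (z - w) * h" by (simp add: cs_diff algebra_simps)
    finally have "norm (f z - f w) \<le> norm (f z) * norm (cs (z - w) * h) * norm (f w)"
      using norm_mult3 by metis
    also have "\<dots> \<le> M * (cmod (z - w) * norm h) * M"
      unfolding norm_cs_mult using M[OF that(1)] M[OF that(2)] M0
      by (intro mult_mono) auto
    finally show ?thesis by (simp add: L_def mult_ac)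
  qed
  obtain n where n: "9 * pi * L < 2 ^ n" using real_arch_pow[of 2 "9 * pi * L"] by auto
  define m :: nat where "m = 2 ^ n"
  have m0: "m > 0" unfolding m_def by simp
  have mbig: "9 * pi * L < real m" unfolding m_def using n by simp
  define a where "a = norm (h ^ m)"
  have a_eq: "a = norm h ^ m" unfolding a_def m_def by (rule sa_pow2_norm[OF sa])
  have a1: "a \<ge> 1" unfolding a_eq using h1 by simp
  define r where "r = root m (1 / (2 * a))"
  have r0: "r \<ge> 0" unfolding r_def using a1 by (intro real_root_ge_zero) simp
  have rm: "r ^ m = 1 / (2 * a)" unfolding r_def using m0 a1 by simp
  have r1: "r \<le> 1" unfolding r_def using m0 a1 by simp
  define w where "w = cis (2 * pi / real m)"
  define z1 where "z1 = complex_of_real r"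
  define z2 where "z2 = complex_of_real r * cis (pi / real m)"
  have z1m: "z1 ^ m = complex_of_real (r ^ m)" unfolding z1_def by simp
  have z2m: "z2 ^ m = - complex_of_real (r ^ m)"
  proof -
    have "cis (pi / real m) ^ m = cis (real m * (pi / real m))" by (rule Complex.DeMoivre)
    also have "real m * (pi / real m) = pi" using m0 by simp
    finally show ?thesis unfolding z2_def by (simp add: power_mult_distrib)
  qed
  have wj: "cmod (w ^ j) = 1" for j unfolding w_def by (simp add: norm_power)
  have in1: "cmod (w ^ j * z1) \<le> 1" for j unfolding norm_mult wj z1_def using r0 r1 by simp
  have in2: "cmod (w ^ j * z2) \<le> 1" for j unfolding norm_mult wj z2_def using r0 r1 by (simp add: norm_mult)
  define A1 where "A1 = 1 - cs (z1 ^ m) * h ^ m"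
  define A2 where "A2 = 1 - cs (z2 ^ m) * h ^ m"
  from averaging[OF m0, of z1 h] in1
  have i1: "inv_el A1" and c1: "cinv A1 = cs (1 / of_nat m) * (\<Sum>j<m. f (w ^ j * z1))"
    unfolding A1_def f_def w_def using inv by auto
  from averaging[OF m0, of z2 h] in2
  have i2: "inv_el A2" and c2: "cinv A2 = cs (1 / of_nat m) * (\<Sum>j<m. f (w ^ j * z2))"
    unfolding A2_def f_def w_def using inv by auto
  have "cinv A1 - cinv A2 = cs (1 / of_nat m) * (\<Sum>j<m. f (w ^ j * z1) - f (w ^ j * z2))"
    unfolding c1 c2 by (simp add: sum_subtractf algebra_simps)
  then have "norm (cinv A1 - cinv A2) = cmod (1 / of_nat m) * norm (\<Sum>j<m. f (w ^ j * z1) - f (w ^ j * z2))"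
    by (simp only: norm_cs_mult)
  also have "cmod (1 / of_nat m) = 1 / real m" by (simp add: norm_divide)
  also have "norm (\<Sum>j<m. f (w ^ j * z1) - f (w ^ j * z2)) \<le> (\<Sum>j<m. L * cmod (z1 - z2))"
  proof -
    have "norm (\<Sum>j<m. f (w ^ j * z1) - f (w ^ j * z2)) \<le> (\<Sum>j<m. norm (f (w ^ j * z1) - f (w ^ j * z2)))"
      by (rule norm_sum)
    also have "\<dots> \<le> (\<Sum>j<m. L * cmod (z1 - z2))"
    proof (rule sum_mono)
      fix j
      have "norm (f (w ^ j * z1) - f (w ^ j * z2)) \<le> L * cmod (w ^ j * z1 - w ^ j * z2)"
        by (rule lip[OF in1 in2])
      also have "cmod (w ^ j * z1 - w ^ j * z2) = cmod (z1 - z2)"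
        by (simp add: right_diff_distrib[symmetric] norm_mult wj)
      finally show "norm (f (w ^ j * z1) - f (w ^ j * z2)) \<le> L * cmod (z1 - z2)" .
    qed
    finally show ?thesis .
  qed
  finally have nd: "norm (cinv A1 - cinv A2) \<le> L * cmod (z1 - z2)"
    using m0 by (simp add: divide_simps mult_left_mono)
  have "cmod (z1 - z2) = r * cmod (1 - cis (pi / real m))"
    unfolding z1_def z2_def by (metis norm_mult norm_of_real abs_of_nonneg r0 mult.right_neutral right_diff_distrib)
  also have "\<dots> \<le> 1 * (2 * \<bar>pi / real m\<bar>)" using r0 r1 cis_bound[of "pi / real m"] by (intro mult_mono) auto
  finally have z12: "cmod (z1 - z2) \<le> 2 * pi / real m" using m0 by simp
  have "A2 - A1 = A1 * (cinv A1 - cinv A2) * A2"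
    using i1 i2 by (simp add: algebra_simps cinv_right cinv_left mult.assoc)
  moreover have "A2 - A1 = cs (2 * complex_of_real (r ^ m)) * h ^ m"
  proof -
    have "A2 - A1 = cs (complex_of_real (r ^ m)) * h ^ m + cs (complex_of_real (r ^ m)) * h ^ m"
      unfolding A1_def A2_def z1m z2m by (simp add: cs_uminus)
    also have "\<dots> = cs (2 * complex_of_real (r ^ m)) * h ^ m"
      by (simp add: cs_mult cs_numeral algebra_simps flip: mult_2)
    finally show ?thesis .
  qed
  ultimately have eq: "cs (2 * complex_of_real (r ^ m)) * h ^ m = A1 * (cinv A1 - cinv A2) * A2" by simp
  have lhs: "norm (cs (2 * complex_of_real (r ^ m)) * h ^ m) = 1"
    unfolding norm_cs_mult rm using a1 by (simp add: a_def[symmetric] norm_mult norm_divide)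
  have nA1: "norm A1 \<le> 3/2"
  proof -
    have "norm A1 \<le> norm (1::'a) + norm (cs (z1 ^ m) * h ^ m)" unfolding A1_def by (rule norm_triangle_ineq4)
    also have "norm (cs (z1 ^ m) * h ^ m) = 1/2" unfolding norm_cs_mult z1m rm using a1 by (simp add: a_def[symmetric] norm_divide)
    finally show ?thesis by simp
  qed
  have nA2: "norm A2 \<le> 3/2"
  proof -
    have "norm A2 \<le> norm (1::'a) + norm (cs (z2 ^ m) * h ^ m)" unfolding A2_def by (rule norm_triangle_ineq4)
    also have "norm (cs (z2 ^ m) * h ^ m) = 1/2" unfolding norm_cs_mult z2m rm using a1 by (simp add: a_def[symmetric] norm_divide)
    finally show ?thesis by simp
  qed
  have "1 \<le> norm A1 * norm (cinv A1 - cinv A2) * norm A2"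
    unfolding lhs[symmetric] eq by (rule norm_mult3)
  also have "\<dots> \<le> (3/2) * (L * (2 * pi / real m)) * (3/2)"
  proof -
    have "norm (cinv A1 - cinv A2) \<le> L * (2 * pi / real m)"
      using nd z12 L0 by (meson mult_left_mono order_trans less_imp_le)
    then show ?thesis using nA1 nA2 L0 m0 by (intro mult_mono) auto
  qed
  also have "\<dots> = 9 * pi * L / (2 * real m)" by (simp add: field_simps)
  also have "\<dots> < 1" using mbig m0 by (simp add: field_simps)
  finally show False by simp
qed

lemma NR:
  fixes h :: "'a::cstar_algebra"
  assumes sa: "adj h = h" and rho: "\<rho> \<ge> 0" and sp: "\<And>l. l \<in> spec h \<Longrightarrow> cmod l \<le> \<rho>"
  shows "norm h \<le> \<rho>"
proof (rule ccontr)
  assume "\<not> norm h \<le> \<rho>"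
  then have lt: "\<rho> < norm h" by simp
  define p where "p = (norm h + \<rho>) / 2"
  have p0: "p > 0" "\<rho> < p" "p < norm h" unfolding p_def using lt rho by auto
  define h' where "h' = cs (complex_of_real (1 / p)) * h"
  have sa': "adj h' = h'" unfolding h'_def by (simp add: adj_mult sa cs_comm)
  have "norm h' < 1"
  proof (rule SR[OF sa'])
    fix z :: complex assume z: "cmod z \<le> 1"
    show "inv_el (1 - cs z * h')"
    proof (cases "z = 0")
      case True then show ?thesis by simp
    next
      case False
      define l where "l = complex_of_real p / z"
      have "cmod l \<ge> p" unfolding l_def using z False p0 by (simp add: norm_divide field_simps)
      then have "l \<notin> spec h" using sp p0 by force
      then have il: "inv_el (cs l - h)" by (simp add: spec_def)
      have "1 - cs z * h' = cs (z / complex_of_real p) * (cs l - h)"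
        unfolding h'_def l_def using False p0
        by (simp add: algebra_simps mult.assoc[symmetric] flip: cs_mult)
      moreover have "inv_el (cs (z / complex_of_real p) :: 'a)" using False p0 by (intro inv_el_cs) simp
      ultimately show ?thesis using il inv_el_mult by metis
    qed
  qed
  then have "norm h / p < 1" unfolding h'_def norm_cs_mult using p0 by (simp add: norm_divide field_simps)
  then show False using p0 by (simp add: field_simps)
qed

lemma spec_affine:
  fixes a :: "'a::cstar_algebra"
  assumes s: "s \<noteq> 0"
  shows "l \<in> spec (cs c + cs s * a) \<longleftrightarrow> (l - c) / s \<in> spec a"
proof -
  have e: "cs l - (cs c + cs s * a) = cs s * (cs ((l - c) / s) - a)"
  proof -
    have "cs s * cs ((l - c) / s) = (cs (l - c) :: 'a)" using s by (simp flip: cs_mult)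
    then show ?thesis unfolding right_diff_distrib by (simp add: cs_diff algebra_simps)
  qed
  have "inv_el (cs s * X) \<longleftrightarrow> inv_el (X::'a)" for X
  proof
    assume "inv_el (cs s * X)"
    moreover have "X = cs (inverse s) * (cs s * X)" using s by (simp add: mult.assoc[symmetric] flip: cs_mult)
    ultimately show "inv_el X" using inv_el_mult inv_el_cs s by (metis inverse_nonzero_iff_nonzero)
  next
    assume "inv_el X" then show "inv_el (cs s * X)" using inv_el_mult inv_el_cs s by metis
  qed
  then show ?thesis unfolding spec_def mem_Collect_eq e by simp
qed

lemma spec_real_minus:
  fixes p :: "'a::cstar_algebra"
  shows "l \<in> spec (of_real t - p) \<longleftrightarrow> complex_of_real t - l \<in> spec p"
proof -
  have "of_real t - p = cs (complex_of_real t) + cs (-1) * p" by (simp add: cs_of_real cs_uminus)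
  then show ?thesis using spec_affine[where s="-1" and c="complex_of_real t" and a=p and l=l] by (simp add: algebra_simps)
qed

lemma spos_norm:
  fixes p :: "'a::cstar_algebra"
  assumes sa: "adj p = p" and sp: "spos p" and t: "norm p \<le> t"
  shows "norm (of_real t - p) \<le> t"
proof (rule NR)
  show "adj (of_real t - p) = of_real t - p" using sa by simp
  show "0 \<le> t" using t norm_ge_zero order_trans by blast
  fix l assume "l \<in> spec (of_real t - p)"
  then have m: "complex_of_real t - l \<in> spec p" by (rule spec_real_minus[THEN iffD1])
  then have "Im (complex_of_real t - l) = 0" "0 \<le> Re (complex_of_real t - l)"
    using sp unfolding spos_def by auto
  moreover have "cmod (complex_of_real t - l) \<le> norm p" using m by (rule spec_bound)
  ultimately have "Im l = 0" "Re l \<le> t" "t - Re l \<le> t"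
    using t by (auto simp: cmod_def)
  then show "cmod l \<le> t" by (simp add: cmod_def)
qed

lemma spos_of_norm:
  fixes p :: "'a::cstar_algebra"
  assumes sa: "adj p = p" and n: "norm (of_real t - p) \<le> t"
  shows "spos p"
  unfolding spos_def
proof
  fix l assume l: "l \<in> spec p"
  have im: "Im l = 0" by (rule sa_spec_real[OF sa l])
  have "complex_of_real t - (complex_of_real t - l) \<in> spec p" using l by simp
  then have "complex_of_real t - l \<in> spec (of_real t - p)" by (rule spec_real_minus[THEN iffD2])
  then have "cmod (complex_of_real t - l) \<le> t" using spec_bound n order_trans by blast
  then have "\<bar>t - Re l\<bar> \<le> t" using im by (simp add: cmod_def)
  then show "Im l = 0 \<and> 0 \<le> Re l" using im by linarith
qed

lemma spos_add:
  fixes p q :: "'a::cstar_algebra"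
  assumes "adj p = p" "adj q = q" "spos p" "spos q"
  shows "spos (p + q)"
proof (rule spos_of_norm[where t = "norm p + norm q"])
  show "adj (p + q) = p + q" using assms by (simp add: adj_add)
  have "of_real (norm p + norm q) - (p + q) = (of_real (norm p) - p) + (of_real (norm q) - q)"
    by (simp add: algebra_simps)
  then have "norm (of_real (norm p + norm q) - (p + q)) \<le> norm (of_real (norm p) - p :: 'a) + norm (of_real (norm q) - q :: 'a)"
    by (metis norm_triangle_ineq)
  also have "\<dots> \<le> norm p + norm q"
    using spos_norm[OF assms(1,3) order_refl] spos_norm[OF assms(2,4) order_refl] by simp
  finally show "norm (of_real (norm p + norm q) - (p + q)) \<le> norm p + norm q" .
qed

lemma spec_swap:
  fixes a b :: "'a::cstar_algebra"
  assumes l0: "l \<noteq> 0" and l: "l \<in> spec (a * b)"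
  shows "l \<in> spec (b * a)"
proof (rule ccontr)
  assume "l \<notin> spec (b * a)"
  then have i: "inv_el (cs l - b * a)" by (simp add: spec_def)
  define u where "u = cinv (cs l - b * a)"
  have u1: "(cs l - b * a) * u = 1" "u * (cs l - b * a) = 1" using i cinv_right cinv_left u_def by auto
  define v where "v = cs (inverse l) * (1 + a * u * b)"
  have "(cs l - a * b) * (1 + a * u * b) = cs l - a * b + a * ((cs l - b * a) * u) * b"
    by (simp add: algebra_simps cs_comm2[of a] mult.assoc)
  also have "\<dots> = cs l" using u1 by simp
  finally have r: "(cs l - a * b) * (1 + a * u * b) = cs l" .
  have "(1 + a * u * b) * (cs l - a * b) = cs l - a * b + a * (u * (cs l - b * a)) * b"
    by (simp add: algebra_simps cs_comm mult.assoc)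
  also have "\<dots> = cs l" using u1 by simp
  finally have lft: "(1 + a * u * b) * (cs l - a * b) = cs l" .
  have cl: "cs (inverse l) * cs l = (1::'a)" using l0 by (simp flip: cs_mult)
  have "(cs l - a * b) * v = 1"
    unfolding v_def using r cl by (metis cs_comm mult.assoc)
  moreover have "v * (cs l - a * b) = 1"
    unfolding v_def using lft cl by (simp add: mult.assoc)
  ultimately have "inv_el (cs l - a * b)" by (rule inv_elI)
  then show False using l by (simp add: spec_def)
qed

lemma spos_uminus_swap:
  fixes x :: "'a::cstar_algebra"
  assumes "spos (- (adj x * x))"
  shows "spos (- (x * adj x))"
  unfolding spos_def
proof
  fix l assume "l \<in> spec (- (x * adj x))"
  then have m: "- l \<in> spec (x * adj x)" by (simp add: spec_uminus)
  show "Im l = 0 \<and> 0 \<le> Re l"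
  proof (cases "l = 0")
    case True then show ?thesis by simp
  next
    case False
    then have "- l \<in> spec (adj x * x)" using spec_swap[of "-l" x "adj x"] m by simp
    then have "l \<in> spec (- (adj x * x))" by (simp add: spec_uminus)
    then show ?thesis using assms unfolding spos_def by auto
  qed
qed

lemma spos_double:
  fixes a :: "'a::cstar_algebra"
  assumes "spos (a + a)"
  shows "spos a"
  unfolding spos_def
proof
  fix l assume l: "l \<in> spec a"
  have "a + a = cs 0 + cs 2 * a" by (simp add: cs_numeral mult_2)
  then have "2 * l \<in> spec (a + a)" using spec_affine[where s=2 and c=0 and a=a and l="2*l"] l by simp
  then have "Im (2 * l) = 0 \<and> 0 \<le> Re (2 * l)" using assms unfolding spos_def by blast
  then show "Im l = 0 \<and> 0 \<le> Re l" by simp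
qed

lemma neg_spos_zero:
  fixes x :: "'a::cstar_algebra"
  assumes n: "spos (- (adj x * x))"
  shows "x = 0"
proof -
  define u where "u = x + adj x"
  define v where "v = cs (- \<i>) * (x - adj x)"
  have su: "adj u = u" unfolding u_def by (simp add: adj_add adj_adj add.commute)
  have sv: "adj v = v" unfolding v_def
    by (simp add: adj_mult adj_adj cs_comm algebra_simps cs_uminus)
  have vv: "v * v = - ((x - adj x) * (x - adj x))"
  proof -
    have "v * v = cs (- \<i>) * cs (- \<i>) * ((x - adj x) * (x - adj x))"
      unfolding v_def by (metis cs_comm2 mult.assoc)
    also have "cs (- \<i>) * cs (- \<i>) = (- 1 :: 'a)"
      by (simp add: cs_uminus flip: cs_mult)
    finally show ?thesis by simp
  qed
  have key: "x * adj x + x * adj x = u * u + v * v + (- (adj x * x)) + (- (adj x * x))"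
    unfolding vv u_def by (simp add: algebra_simps)
  have s1: "spos (u * u)" by (rule spos_square[OF su])
  have s2: "spos (v * v)" by (rule spos_square[OF sv])
  have a1: "adj (u * u) = u * u" using su by (simp add: adj_mult)
  have a2: "adj (v * v) = v * v" using sv by (simp add: adj_mult)
  have a3: "adj (- (adj x * x)) = - (adj x * x)" by (simp add: adj_mult adj_adj)
  have "spos (x * adj x + x * adj x)"
    unfolding key
    by (intro spos_add s1 s2 n a1 a2 a3) (simp_all add: adj_add a1 a2 a3 adj_mult adj_adj su sv)
  then have sp: "spos (x * adj x)" by (rule spos_double)
  have sn: "spos (- (x * adj x))" by (rule spos_uminus_swap[OF n])
  have "norm (x * adj x) \<le> 0"
  proof (rule NR)
    show "adj (x * adj x) = x * adj x" by (simp add: adj_mult adj_adj)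
    fix l assume l: "l \<in> spec (x * adj x)"
    then have "Im l = 0" "0 \<le> Re l" using sp unfolding spos_def by auto
    moreover have "- l \<in> spec (- (x * adj x))" using l by (simp add: spec_uminus)
    then have "0 \<le> Re (- l)" using sn unfolding spos_def by blast
    ultimately have "l = 0" by (simp add: complex_eq_iff)
    then show "cmod l \<le> 0" by simp
  qed simp
  then have "x * adj x = 0" by simp
  then show ?thesis by (rule cstar_zero')
qed

lemma sumsq_zero:
  fixes x y :: "'a::cstar_algebra"
  assumes sy: "adj y = y" and e: "adj x * x + y * y = 0"
  shows "y = 0"
proof -
  have "- (adj x * x) = y * y" using minus_unique[OF e] .
  then have "spos (- (adj x * x))" using spos_square[OF sy] by simp
  then have "x = 0" by (rule neg_spos_zero)
  then have "adj y * y = 0" using e sy by simp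
  then show ?thesis by (rule cstar_zero)
qed

lemma spos_inv_plus:
  fixes p :: "'a::cstar_algebra"
  assumes sp: "spos p" and c: "c > 0"
  shows "inv_el (of_real c + p)"
proof -
  have "complex_of_real (-c) \<notin> spec p" using sp c unfolding spos_def by force
  then have "inv_el (cs (complex_of_real (-c)) - p)" by (simp add: spec_def)
  moreover have "cs (complex_of_real (-c)) - p = - (of_real c + p)" by (simp add: cs_of_real cs_uminus)
  ultimately show ?thesis by (metis inv_el_uminus_iff)
qed

definition pw :: "real \<Rightarrow> 'a::cstar_algebra \<Rightarrow> 'a" where
  "pw a k = (\<Sum>n. (a gchoose n) *\<^sub>R (- k) ^ n)"

lemma binom_abs_summable:
  fixes r :: real
  assumes r0: "0 \<le> r" and r1: "r < 1"
  shows "summable (\<lambda>n. \<bar>a gchoose n\<bar> * r ^ n)"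
proof -
  define \<rho> where "\<rho> = (1 + r) / 2"
  have "\<bar>\<rho>\<bar> < 1" unfolding \<rho>_def using r0 r1 by simp
  from gen_binomial_real[OF this, of a] have "summable (\<lambda>n. (a gchoose n) * \<rho> ^ n)"
    by (rule sums_summable)
  from powser_insidea[OF this, of r] have "summable (\<lambda>n. norm ((a gchoose n) * r ^ n))"
    unfolding \<rho>_def using r0 r1 by simp
  then show ?thesis using r0 by (simp add: abs_mult)
qed

lemma pw_norm_summable:
  fixes k :: "'a::cstar_algebra"
  assumes k: "norm k < 1"
  shows "summable (\<lambda>n. norm ((a gchoose n) *\<^sub>R (- k) ^ n))"
proof (rule summable_comparison_test'[OF binom_abs_summable[OF norm_ge_zero k, of a], of 0])
  fix n :: nat
  have "norm ((a gchoose n) *\<^sub>R (- k) ^ n) = \<bar>a gchoose n\<bar> * norm ((- k) ^ n)" by simp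
  also have "\<dots> \<le> \<bar>a gchoose n\<bar> * norm k ^ n"
    using norm_power_ineq[of "- k" n] by (intro mult_left_mono) auto
  finally show "norm (norm ((a gchoose n) *\<^sub>R (- k) ^ n)) \<le> \<bar>a gchoose n\<bar> * norm k ^ n" by simp
qed

lemma pw_summable:
  fixes k :: "'a::cstar_algebra"
  assumes k: "norm k < 1"
  shows "summable (\<lambda>n. (a gchoose n) *\<^sub>R (- k) ^ n)"
  by (rule summable_norm_cancel[OF pw_norm_summable[OF k]])

lemma pw_mult:
  fixes k :: "'a::cstar_algebra"
  assumes k: "norm k < 1"
  shows "pw a k * pw b k = pw (a + b) k"
proof -
  let ?A = "\<lambda>n. (a gchoose n) *\<^sub>R (- k) ^ n"
  let ?B = "\<lambda>n. (b gchoose n) *\<^sub>R (- k) ^ n"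
  have cp: "(\<lambda>n. \<Sum>i\<le>n. ?A i * ?B (n - i)) sums (pw a k * pw b k)"
    unfolding pw_def by (rule Cauchy_product_sums[OF pw_norm_summable[OF k] pw_norm_summable[OF k]])
  have eq: "(\<Sum>i\<le>n. ?A i * ?B (n - i)) = ((a + b) gchoose n) *\<^sub>R (- k) ^ n" for n
  proof -
    have "(\<Sum>i\<le>n. ?A i * ?B (n - i)) = (\<Sum>i\<le>n. ((a gchoose i) * (b gchoose (n - i))) *\<^sub>R (- k) ^ n)"
    proof (rule sum.cong[OF refl])
      fix i assume "i \<in> {..n}"
      then have "i + (n - i) = n" by simp
      then have "(- k) ^ i * (- k) ^ (n - i) = (- k) ^ n" by (metis power_add)
      then show "?A i * ?B (n - i) = ((a gchoose i) * (b gchoose (n - i))) *\<^sub>R (- k) ^ n"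
        by simp
    qed
    also have "\<dots> = (\<Sum>i\<le>n. (a gchoose i) * (b gchoose (n - i))) *\<^sub>R (- k) ^ n"
      by (simp add: scaleR_sum_left)
    also have "(\<Sum>i\<le>n. (a gchoose i) * (b gchoose (n - i))) = (a + b) gchoose n"
      using gbinomial_Vandermonde[of a b n] by (simp add: atMost_atLeast0)
    finally show ?thesis .
  qed
  have "(\<lambda>n. ((a + b) gchoose n) *\<^sub>R (- k) ^ n) sums (pw (a + b) k)"
    unfolding pw_def by (rule summable_sums[OF pw_summable[OF k]])
  then show ?thesis using cp unfolding eq by (rule sums_unique2[symmetric])
qed

lemma pw_one:
  fixes k :: "'a::cstar_algebra"
  shows "pw 1 k = 1 - k"
proof -
  have z: "((1::real) gchoose n) *\<^sub>R (- k) ^ n = 0" if "n \<notin> {0, 1}" for n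
  proof -
    have "(1::real) gchoose n = of_nat (1 choose n)" by (metis binomial_gbinomial of_nat_1)
    also have "1 choose n = 0" using that by (simp add: binomial_eq_0)
    finally show ?thesis by simp
  qed
  have "(\<lambda>n. ((1::real) gchoose n) *\<^sub>R (- k) ^ n) sums (\<Sum>n\<in>{0,1}. ((1::real) gchoose n) *\<^sub>R (- k) ^ n)"
    by (rule sums_finite) (use z in auto)
  then show ?thesis unfolding pw_def by (simp add: sums_iff)
qed

lemma pw_adj:
  fixes k :: "'a::cstar_algebra"
  assumes sa: "adj k = k" and k: "norm k < 1"
  shows "adj (pw a k) = pw a k"
proof -
  have "adj (pw a k) = (\<Sum>n. adj ((a gchoose n) *\<^sub>R (- k) ^ n))"
    unfolding pw_def by (rule bounded_linear.suminf[OF bounded_linear_adj pw_summable[OF k]])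
  also have "\<dots> = pw a k" unfolding pw_def by (simp add: adj_power sa)
  finally show ?thesis .
qed

lemma pw_comm:
  fixes k x :: "'a::cstar_algebra"
  assumes c: "x * k = k * x" and k: "norm k < 1"
  shows "x * pw a k = pw a k * x"
proof -
  have c': "(- k) ^ n * x = x * (- k) ^ n" for n
    by (rule power_commuting_commutes) (simp add: c)
  have "x * pw a k = (\<Sum>n. x * ((a gchoose n) *\<^sub>R (- k) ^ n))"
    unfolding pw_def by (rule suminf_mult[OF pw_summable[OF k], symmetric])
  also have "\<dots> = (\<Sum>n. ((a gchoose n) *\<^sub>R (- k) ^ n) * x)"
    by (simp add: c')
  also have "\<dots> = pw a k * x"
    unfolding pw_def by (rule suminf_mult2[OF pw_summable[OF k], symmetric])
  finally show ?thesis .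
qed

lemma sqrt_ex:
  fixes g :: "'a::cstar_algebra"
  assumes sg: "adj g = g"
  shows "\<exists>S T. adj S = S \<and> adj T = T \<and> T * T = S \<and> S * S = 1 + g * g \<and>
     (\<forall>x. x * (g * g) = (g * g) * x \<longrightarrow> x * S = S * x \<and> x * T = T * x)"
proof -
  define D where "D = 1 + g * g"
  define c where "c = 1 + norm D"
  have c1: "c \<ge> 1" unfolding c_def by simp
  define k where "k = 1 - (1 / c) *\<^sub>R D"
  have sD: "adj D = D" unfolding D_def using sg by (simp add: adj_add adj_mult)
  have sk: "adj k = k" unfolding k_def using sD by simp
  have specD: "Im \<mu> = 0 \<and> 1 \<le> Re \<mu> \<and> Re \<mu> \<le> norm D" if m: "\<mu> \<in> spec D" for \<mu>
  proof -
    have "D = cs 1 + cs 1 * (g * g)" unfolding D_def by simp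
    then have "(\<mu> - 1) / 1 \<in> spec (g * g)" using spec_affine[where s=1 and c=1 and a="g*g" and l=\<mu>] m by simp
    then have "Im (\<mu> - 1) = 0 \<and> 0 \<le> Re (\<mu> - 1)" using spos_square[OF sg] unfolding spos_def by auto
    moreover have "cmod \<mu> \<le> norm D" using m by (rule spec_bound)
    ultimately show ?thesis using abs_Re_le_cmod[of \<mu>] by auto
  qed
  have nk: "norm k \<le> 1 - 1 / c"
  proof (rule NR[OF sk])
    show "0 \<le> 1 - 1 / c" using c1 by simp
    fix l assume l: "l \<in> spec k"
    have "k = cs 1 + cs (- (1 / complex_of_real c)) * D"
      unfolding k_def by (simp add: cs_uminus scaleR_conv_of_real flip: cs_of_real)
    then have "(l - 1) / (- (1 / complex_of_real c)) \<in> spec D"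
      using spec_affine[where s="- (1 / complex_of_real c)" and c=1 and a=D and l=l] l c1 by simp
    then have m: "complex_of_real c * (1 - l) \<in> spec D" using c1 by (simp add: field_simps)
    from specD[OF m] have "Im l = 0" "1 \<le> c * (1 - Re l)" "c * (1 - Re l) \<le> norm D" using c1 by auto
    then have "Im l = 0" "Re l \<le> 1 - 1 / c" "1 - 1 / c \<ge> - (1 - 1/c) \<and> Re l \<ge> 1 - norm D / c"
      using c1 by (auto simp: field_simps)
    moreover have "1 - norm D / c = 1 / c"
    proof -
      have "c - norm D = 1" by (simp add: c_def)
      moreover have "1 - norm D / c = (c - norm D) / c" using c1 by (simp add: field_simps)
      ultimately show ?thesis by simp
    qed
    ultimately have "Im l = 0" "\<bar>Re l\<bar> \<le> 1 - 1 / c" using c1 by (auto simp: abs_le_iff)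
    then show "cmod l \<le> 1 - 1 / c" by (simp add: cmod_def)
  qed
  have k1: "norm k < 1" using nk c1 by (smt (verit) divide_pos_pos)
  define S where "S = sqrt c *\<^sub>R pw (1/2) k"
  define T where "T = sqrt (sqrt c) *\<^sub>R pw (1/4) k"
  have "adj S = S" unfolding S_def using pw_adj[OF sk k1] by simp
  moreover have "adj T = T" unfolding T_def using pw_adj[OF sk k1] by simp
  moreover have "T * T = S"
  proof -
    have "T * T = (sqrt (sqrt c) * sqrt (sqrt c)) *\<^sub>R (pw (1/4) k * pw (1/4) k)"
      unfolding T_def by simp
    also have "pw (1/4) k * pw (1/4) k = pw (1/2) k" using pw_mult[OF k1, of "1/4" "1/4"] by simp
    also have "sqrt (sqrt c) * sqrt (sqrt c) = sqrt c" using c1 by simp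
    finally show ?thesis unfolding S_def .
  qed
  moreover have "S * S = 1 + g * g"
  proof -
    have "S * S = (sqrt c * sqrt c) *\<^sub>R (pw (1/2) k * pw (1/2) k)"
      unfolding S_def by simp
    also have "pw (1/2) k * pw (1/2) k = pw 1 k" using pw_mult[OF k1, of "1/2" "1/2"] by simp
    also have "sqrt c * sqrt c = c" using c1 by simp
    also have "c *\<^sub>R pw 1 k = D" unfolding pw_one k_def using c1 by (simp add: algebra_simps)
    finally show ?thesis unfolding D_def .
  qed
  moreover have "x * S = S * x \<and> x * T = T * x" if "x * (g * g) = (g * g) * x" for x
  proof -
    have "x * k = k * x" unfolding k_def D_def using that by (simp add: algebra_simps)
    then have "x * pw a k = pw a k * x" for a using pw_comm[OF _ k1] by blast
    then show ?thesis unfolding S_def T_def by simp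
  qed
  ultimately show ?thesis by blast
qed

lemma psqrt_eq:
  fixes S T P D :: "'a::cstar_algebra"
  assumes sS: "adj S = S" and sT: "adj T = T" and TT: "T * T = S" and SS: "S * S = D"
    and iT: "inv_el T"
    and comm: "\<And>x. x * D = D * x \<Longrightarrow> x * S = S * x \<and> x * T = T * x"
    and pP: "adj P = P" and PP: "P * P = P" and PD: "P * D = D * P"
  shows "psqrt (D * P) = S * P"
  unfolding psqrt_def
proof (rule the_equality)
  have PS: "P * S = S * P" and PT: "P * T = T * P" using comm[OF PD] by auto
  have "adj (T * P) * (T * P) = S * P"
    using PT PP by (simp add: adj_mult sT pP mult.assoc TT[symmetric]) (metis mult.assoc)
  then have "Defs.positive (S * P)" unfolding Defs.positive_def by metis
  moreover have "S * P * (S * P) = D * P"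
    using PS PP SS by (metis mult.assoc)
  ultimately show "Defs.positive (S * P) \<and> S * P * (S * P) = D * P" by simp
next
  fix r assume a: "Defs.positive r \<and> r * r = D * P"
  then obtain b where rb: "r = adj b * b" and rr: "r * r = D * P" unfolding Defs.positive_def by blast
  have sr: "adj r = r" unfolding rb by (simp add: adj_mult adj_adj)
  have PS: "P * S = S * P" and PT: "P * T = T * P" using comm[OF PD] by auto
  have "adj (r * (1 - P)) * (r * (1 - P)) = (1 - P) * (r * r) * (1 - P)"
    by (simp add: adj_mult sr pP mult.assoc)
  also have "\<dots> = (1 - P) * D * (P * (1 - P))" unfolding rr by (simp add: mult.assoc)
  also have "P * (1 - P) = 0" using PP by (simp add: algebra_simps)
  finally have "r * (1 - P) = 0" using cstar_zero by simp
  then have rP: "r * P = r" by (simp add: algebra_simps)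
  then have Pr: "P * r = r" using sr pP by (metis adj_mult)
  have rD: "r * D = D * r"
  proof -
    have "r * D = r * (P * D)" using rP by (metis mult.assoc)
    also have "\<dots> = r * (r * r)" using PD rr by simp
    also have "\<dots> = (r * r) * r" by (simp add: mult.assoc)
    also have "\<dots> = D * (P * r)" using rr by (simp add: mult.assoc)
    finally show ?thesis using Pr by simp
  qed
  have rS: "r * S = S * r" and rT: "r * T = T * r" using comm[OF rD] by auto
  define h where "h = r - S * P"
  have sh: "adj h = h" unfolding h_def by (simp add: adj_mult sr sS pP PS)
  have Ph: "P * h = h" unfolding h_def using Pr PP PS by (simp add: algebra_simps mult.assoc[symmetric])
  have hP: "h * P = h" unfolding h_def using rP PP by (simp add: algebra_simps mult.assoc)
  have TS: "T * S = S * T" using TT by (metis mult.assoc)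
  have Th: "T * h = h * T" unfolding h_def using rT PT TS by (simp add: algebra_simps mult.assoc) (metis mult.assoc)
  have Sh: "S * h = h * S" unfolding h_def using rS PS by (simp add: algebra_simps mult.assoc)
  have h0: "h * (r + S * P) = 0"
  proof -
    have "h * (r + S * P) = r * r + r * (S * P) - S * P * r - S * P * (S * P)"
      unfolding h_def by (simp add: algebra_simps)
    also have "r * (S * P) = S * P * r" using rS rP Pr by (metis mult.assoc)
    also have "S * P * (S * P) = D * P" using PS PP SS by (metis mult.assoc)
    finally show ?thesis using rr by simp
  qed
  define x where "x = b * h"
  define y where "y = T * h"
  have sy: "adj y = y" unfolding y_def using Th by (simp add: adj_mult sT sh)
  have "adj x * x = h * r * h" unfolding x_def rb by (simp add: adj_mult sh mult.assoc)
  moreover have "y * y = h * (S * P) * h"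
  proof -
    have "y * y = T * T * (h * h)" unfolding y_def using Th by (metis mult.assoc)
    also have "\<dots> = h * S * h" using Sh TT by (metis mult.assoc)
    also have "\<dots> = h * (S * P) * h" using Ph PS by (metis mult.assoc)
    finally show ?thesis .
  qed
  ultimately have "adj x * x + y * y = h * (r + S * P) * h" by (simp add: algebra_simps)
  also have "\<dots> = 0" using h0 by simp
  finally have "y = 0" using sumsq_zero[OF sy] by blast
  then have "cinv T * (T * h) = 0" unfolding y_def by simp
  then have "h = 0" using cinv_left[OF iT] by (simp add: mult.assoc[symmetric])
  then show "r = S * P" unfolding h_def by simp
qed

lemma mp_unique:
  fixes t x :: "'a::cstar_algebra"
  assumes a1: "t * x * t = t" and a2: "x * t * x = x" and a3: "adj (t * x) = t * x" and a4: "adj (x * t) = x * t"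
  shows "mp_inv t = x"
  unfolding mp_inv_def
proof (rule the_equality)
  show "t * x * t = t \<and> x * t * x = x \<and> adj (t * x) = t * x \<and> adj (x * t) = x * t" using assms by simp
next
  fix y assume "t * y * t = t \<and> y * t * y = y \<and> adj (t * y) = t * y \<and> adj (y * t) = y * t"
  then have b1: "t * y * t = t" and b2: "y * t * y = y" and b3: "adj (t * y) = t * y" and b4: "adj (y * t) = y * t"
    by auto
  have at: "adj t = adj t * adj y * adj t" using b1 by (metis adj_mult mult.assoc)
  have at2: "adj t = adj t * adj x * adj t" using a1 by (metis adj_mult mult.assoc)
  have "x = x * (t * x)" using a2 by (simp add: mult.assoc)
  also have "\<dots> = x * (adj x * adj t)" using a3 by (metis adj_mult)
  also have "\<dots> = x * adj x * (adj t * adj y * adj t)" using at by (metis mult.assoc)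
  also have "\<dots> = x * (adj x * adj t) * (adj y * adj t)" by (simp add: mult.assoc)
  also have "\<dots> = x * (t * x) * (t * y)" using a3 b3 by (metis adj_mult)
  also have "\<dots> = x * t * y" using a2 by (simp add: mult.assoc)
  finally have xe: "x = x * t * y" .
  have "y = (y * t) * y" using b2 by (simp add: mult.assoc)
  also have "\<dots> = adj t * adj y * y" using b4 by (metis adj_mult)
  also have "\<dots> = adj t * adj x * adj t * adj y * y" using at2 by metis
  also have "\<dots> = (adj t * adj x) * (adj t * adj y) * y" by (simp add: mult.assoc)
  also have "\<dots> = (x * t) * (y * t) * y" using a4 b4 by (metis adj_mult)
  also have "\<dots> = x * t * y" using b2 by (simp add: mult.assoc)
  finally show "y = x" using xe by simp
qed

lemma mp_inv_SP:
  fixes S P :: "'a::cstar_algebra"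
  assumes iS: "inv_el S" and sS: "adj S = S" and pP: "adj P = P" and PP: "P * P = P" and PS: "P * S = S * P"
  shows "mp_inv (S * P) = cinv S * P"
proof (rule mp_unique)
  have PSi: "P * cinv S = cinv S * P" using cinv_comm[OF iS PS[symmetric]] by simp
  have a: "S * P * (cinv S * P) = P"
  proof -
    have "S * P * (cinv S * P) = S * (P * cinv S) * P" by (simp add: mult.assoc)
    also have "\<dots> = (S * cinv S) * (P * P)" unfolding PSi by (simp add: mult.assoc)
    finally show ?thesis using cinv_right[OF iS] PP by simp
  qed
  have b: "cinv S * P * (S * P) = P"
  proof -
    have "cinv S * P * (S * P) = cinv S * (P * S) * P" by (simp add: mult.assoc)
    also have "\<dots> = (cinv S * S) * (P * P)" unfolding PS by (simp add: mult.assoc)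
    finally show ?thesis using cinv_left[OF iS] PP by simp
  qed
  have "S * P * (cinv S * P) * (S * P) = (P * S) * P" unfolding a by (simp add: mult.assoc)
  also have "\<dots> = S * (P * P)" unfolding PS by (simp add: mult.assoc)
  finally show "S * P * (cinv S * P) * (S * P) = S * P" unfolding PP .
  have "cinv S * P * (S * P) * (cinv S * P) = (P * cinv S) * P" unfolding b by (simp add: mult.assoc)
  also have "\<dots> = cinv S * (P * P)" unfolding PSi by (simp add: mult.assoc)
  finally show "cinv S * P * (S * P) * (cinv S * P) = cinv S * P" unfolding PP .
  show "adj (S * P * (cinv S * P)) = S * P * (cinv S * P)" unfolding a pP ..
  show "adj (cinv S * P * (S * P)) = cinv S * P * (S * P)" unfolding b pP ..
qed

lemma cinv_SP1:
  fixes S P :: "'a::cstar_algebra"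
  assumes i: "inv_el (S + 1)" and PP: "P * P = P" and PS: "P * S = S * P"
  shows "cinv (S * P + 1) = cinv (S + 1) * P + (1 - P)"
proof (rule cinv_eq)
  define G where "G = cinv (S + 1)"
  have PG: "P * G = G * P" unfolding G_def using cinv_comm[OF i, of P] PS by (simp add: algebra_simps)
  have PG2: "P * (G * x) = G * (P * x)" for x using PG by (metis mult.assoc)
  have PP2: "P * (P * x) = P * x" for x using PP by (metis mult.assoc)
  have PS2: "P * (S * x) = S * (P * x)" for x using PS by (metis mult.assoc)
  have G1: "(S + 1) * G = 1" "G * (S + 1) = 1" unfolding G_def using i cinv_right cinv_left by auto
  have G1': "S * G = 1 - G" "G * S = 1 - G" using G1 by (simp_all add: algebra_simps)
  have G2: "S * (G * x) = x - G * x" for x using G1'(1) by (metis mult.assoc left_diff_distrib mult_1_left)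
  have G3: "G * (S * x) = x - G * x" for x using G1'(2) by (metis mult.assoc left_diff_distrib mult_1_left)
  have "(S * P + 1) * (G * P + (1 - P)) = 1"
    by (simp add: algebra_simps mult.assoc PG PG2 PP PP2 G2)
  then show "(S * P + 1) * (cinv (S + 1) * P + (1 - P)) = 1" unfolding G_def .
  have "(G * P + (1 - P)) * (S * P + 1) = 1"
    by (simp add: algebra_simps mult.assoc PG PG2 PP PP2 PS PS2 G2 G3)
  then show "(cinv (S + 1) * P + (1 - P)) * (S * P + 1) = 1" unfolding G_def .
qed

lemma matched_core:
  fixes S Si G P Q Qs :: "'a::cstar_algebra"
  assumes SSi: "S * Si = 1" "Si * S = 1"
    and SG: "S * G = 1 - G" "G * S = 1 - G"
    and SiG: "Si * G = Si - G" "G * Si = Si - G"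
    and cP: "P * S = S * P" "P * Si = Si * P" "P * G = G * P"
    and cQ: "Q * S = S * Q" "Q * Si = Si * Q" "Q * G = G * Q"
    and cQs: "Qs * S = S * Qs" "Qs * Si = Si * Qs" "Qs * G = G * Qs"
    and PP: "P * P = P" and PQ: "P * Q = Q" and QP: "Q * P = P" and QsP: "Qs * P = Qs" and PQs: "P * Qs = P"
    and QQ: "Q * Q = Q" and QsQs: "Qs * Qs = Qs"
  shows "(S * P + (P + P - Qs)) * (Si * P) * (G * P + (1 - P)) * (S * P + (P + P - Q))
       = Si * G * ((S + 1 + 1) * (S + 1 + 1) * P - (S + 1 + 1) * (Q + Qs) + Qs * Q)"
proof -
  have r: "\<And>x. S * (Si * x) = x" "\<And>x. Si * (S * x) = x"
    "\<And>x. S * (G * x) = x - G * x" "\<And>x. G * (S * x) = x - G * x"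
    "\<And>x. Si * (G * x) = Si * x - G * x" "\<And>x. G * (Si * x) = Si * x - G * x"
    "\<And>x. P * (S * x) = S * (P * x)" "\<And>x. P * (Si * x) = Si * (P * x)" "\<And>x. P * (G * x) = G * (P * x)"
    "\<And>x. Q * (S * x) = S * (Q * x)" "\<And>x. Q * (Si * x) = Si * (Q * x)" "\<And>x. Q * (G * x) = G * (Q * x)"
    "\<And>x. Qs * (S * x) = S * (Qs * x)" "\<And>x. Qs * (Si * x) = Si * (Qs * x)" "\<And>x. Qs * (G * x) = G * (Qs * x)"
    "\<And>x. P * (P * x) = P * x" "\<And>x. P * (Q * x) = Q * x" "\<And>x. Q * (P * x) = P * x"
    "\<And>x. Qs * (P * x) = Qs * x" "\<And>x. P * (Qs * x) = P * x"
    "\<And>x. Q * (Q * x) = Q * x" "\<And>x. Qs * (Qs * x) = Qs * x"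
    using assms by (simp_all add: mult.assoc[symmetric] left_diff_distrib)
  show ?thesis
    by (simp add: algebra_simps r assms)
qed

definition FF :: "'a::cstar_algebra \<Rightarrow> 'a \<Rightarrow> 'a \<Rightarrow> 'a \<Rightarrow> 'a" where
  "FF S Si x y = (S + 1 + 1) * (S + 1 + 1) * (x * y * (Si * Si)) - (S + 1 + 1) * (x + y) + y * x"

lemma alg_all:
  fixes S Si G Q Qs :: "'a::cstar_algebra"
  assumes SSi: "S * Si = 1" "Si * S = 1"
    and SG: "S * G = 1 - G" "G * S = 1 - G"
    and SiG: "Si * G = Si - G" "G * Si = Si - G"
    and cQ: "Q * S = S * Q" "Q * Si = Si * Q" "Q * G = G * Q"
    and cQs: "Qs * S = S * Qs" "Qs * Si = Si * Qs" "Qs * G = G * Qs"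
    and QQ: "Q * Q = Q" and QsQs: "Qs * Qs = Qs"
    and ZQ: "Q * Qs = S * S - Qs * Q + Q + Qs - 1"
  shows "Si * G * FF S Si (1 - Q) (1 - Qs) + Si * G * FF S Si Qs Q = 1 + 1"
    and "Si * G * FF S Si Q Qs - Si * G * FF S Si Qs Q = (1 + 1 + 1 + 1) * (Si * Si * Si * (Q * Qs - Qs * Q))"
    and "Q * Qs * (Si * Si) * (Si * G * FF S Si Q Qs - 1) * Q = Si * Q"
    and "Q * (Si * G * FF S Si Q Qs - 1) * (Q * Qs * (Si * Si)) = (Si + Si - S) * (Q * Qs * (Si * Si))"
proof -
  have r: "\<And>x. S * (Si * x) = x" "\<And>x. Si * (S * x) = x"
    "\<And>x. S * (G * x) = x - G * x" "\<And>x. G * (S * x) = x - G * x"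
    "\<And>x. Si * (G * x) = Si * x - G * x" "\<And>x. G * (Si * x) = Si * x - G * x"
    "\<And>x. Q * (S * x) = S * (Q * x)" "\<And>x. Q * (Si * x) = Si * (Q * x)" "\<And>x. Q * (G * x) = G * (Q * x)"
    "\<And>x. Qs * (S * x) = S * (Qs * x)" "\<And>x. Qs * (Si * x) = Si * (Qs * x)" "\<And>x. Qs * (G * x) = G * (Qs * x)"
    "\<And>x. Q * (Q * x) = Q * x" "\<And>x. Qs * (Qs * x) = Qs * x"
    "\<And>x. Q * (Qs * x) = S * (S * x) - Qs * (Q * x) + Q * x + Qs * x - x"
    using assms by (simp_all add: mult.assoc[symmetric] left_diff_distrib distrib_right)
  note rr = r assms
  show "Si * G * FF S Si (1 - Q) (1 - Qs) + Si * G * FF S Si Qs Q = 1 + 1"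
    unfolding FF_def by (simp add: algebra_simps rr del: one_add_one numeral_plus_one one_plus_numeral numeral_plus_numeral add_numeral_left)
  show "Si * G * FF S Si Q Qs - Si * G * FF S Si Qs Q = (1 + 1 + 1 + 1) * (Si * Si * Si * (Q * Qs - Qs * Q))"
    unfolding FF_def by (simp add: algebra_simps rr del: one_add_one numeral_plus_one one_plus_numeral numeral_plus_numeral add_numeral_left)
  show "Q * Qs * (Si * Si) * (Si * G * FF S Si Q Qs - 1) * Q = Si * Q"
    unfolding FF_def by (simp add: algebra_simps rr del: one_add_one numeral_plus_one one_plus_numeral numeral_plus_numeral add_numeral_left)
  show "Q * (Si * G * FF S Si Q Qs - 1) * (Q * Qs * (Si * Si)) = (Si + Si - S) * (Q * Qs * (Si * Si))"
    unfolding FF_def by (simp add: algebra_simps rr del: one_add_one numeral_plus_one one_plus_numeral numeral_plus_numeral add_numeral_left)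
qed

lemma alg_P:
  fixes S Si G Q Qs :: "'a::cstar_algebra"
  assumes SSi: "S * Si = 1" "Si * S = 1"
    and SG: "S * G = 1 - G" "G * S = 1 - G"
    and SiG: "Si * G = Si - G" "G * Si = Si - G"
    and cQ: "Q * S = S * Q" "Q * Si = Si * Q" "Q * G = G * Q"
    and cQs: "Qs * S = S * Qs" "Qs * Si = Si * Qs" "Qs * G = G * Qs"
    and QQ: "Q * Q = Q" and QsQs: "Qs * Qs = Qs"
    and ZQ: "Q * Qs = S * S - Qs * Q + Q + Qs - 1"
    and P: "P = Q * Qs * (Si * Si)"
  shows "P * P = P" "P * Q = Q" "Q * P = P" "Qs * P = Qs" "P * Qs = P"
    "P * S = S * P" "P * Si = Si * P" "P * G = G * P" "S * S * P = Q * Qs"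
    "(P + P - Q) * (P + P - Qs) = Q * Qs"
proof -
  have r: "\<And>x. S * (Si * x) = x" "\<And>x. Si * (S * x) = x"
    "\<And>x. S * (G * x) = x - G * x" "\<And>x. G * (S * x) = x - G * x"
    "\<And>x. Si * (G * x) = Si * x - G * x" "\<And>x. G * (Si * x) = Si * x - G * x"
    "\<And>x. Q * (S * x) = S * (Q * x)" "\<And>x. Q * (Si * x) = Si * (Q * x)" "\<And>x. Q * (G * x) = G * (Q * x)"
    "\<And>x. Qs * (S * x) = S * (Qs * x)" "\<And>x. Qs * (Si * x) = Si * (Qs * x)" "\<And>x. Qs * (G * x) = G * (Qs * x)"
    "\<And>x. Q * (Q * x) = Q * x" "\<And>x. Qs * (Qs * x) = Qs * x"
    "\<And>x. Q * (Qs * x) = S * (S * x) - Qs * (Q * x) + Q * x + Qs * x - x"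
    using assms by (simp_all add: mult.assoc[symmetric] left_diff_distrib distrib_right)
  note rr = r SSi SG SiG cQ cQs QQ QsQs ZQ
  note ds = one_add_one numeral_plus_one one_plus_numeral numeral_plus_numeral add_numeral_left
  show "P * P = P" unfolding P by (simp add: algebra_simps rr del: ds)
  show "P * Q = Q" unfolding P by (simp add: algebra_simps rr del: ds)
  show "Q * P = P" unfolding P by (simp add: algebra_simps rr del: ds)
  show "Qs * P = Qs" unfolding P by (simp add: algebra_simps rr del: ds)
  show "P * Qs = P" unfolding P by (simp add: algebra_simps rr del: ds)
  show "P * S = S * P" unfolding P by (simp add: algebra_simps rr del: ds)
  show "P * Si = Si * P" unfolding P by (simp add: algebra_simps rr del: ds)
  show "P * G = G * P" unfolding P by (simp add: algebra_simps rr del: ds)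
  show "S * S * P = Q * Qs" unfolding P by (simp add: algebra_simps rr del: ds)
  show "(P + P - Q) * (P + P - Qs) = Q * Qs" unfolding P by (simp add: algebra_simps rr del: ds)
qed

lemma central_rels:
  fixes S :: "'a::cstar_algebra"
  assumes iS: "inv_el S" and iS1: "inv_el (S + 1)"
  shows "S * cinv S = 1" "cinv S * S = 1"
    "S * cinv (S + 1) = 1 - cinv (S + 1)" "cinv (S + 1) * S = 1 - cinv (S + 1)"
    "cinv S * cinv (S + 1) = cinv S - cinv (S + 1)" "cinv (S + 1) * cinv S = cinv S - cinv (S + 1)"
proof -
  define Si where "Si = cinv S"
  define G where "G = cinv (S + 1)"
  have a: "S * Si = 1" "Si * S = 1" unfolding Si_def using iS cinv_right cinv_left by auto
  have b: "(S + 1) * G = 1" "G * (S + 1) = 1" unfolding G_def using iS1 cinv_right cinv_left by auto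
  have SG: "S * G = 1 - G" "G * S = 1 - G" using b by (simp_all add: algebra_simps)
  have GS: "G * S = S * G" using SG by simp
  have GSi: "G * Si = Si * G" unfolding Si_def using cinv_comm[OF iS GS[symmetric]] by simp
  have "Si * G = Si * ((S + 1) * G) - (Si * S) * G" by (simp add: algebra_simps)
  also have "\<dots> = Si - G" using a b by simp
  finally have SiG: "Si * G = Si - G" .
  show "S * cinv S = 1" "cinv S * S = 1" using a unfolding Si_def by auto
  show "S * cinv (S + 1) = 1 - cinv (S + 1)" "cinv (S + 1) * S = 1 - cinv (S + 1)" using SG unfolding G_def by auto
  show "cinv S * cinv (S + 1) = cinv S - cinv (S + 1)" "cinv (S + 1) * cinv S = cinv S - cinv (S + 1)"
    using SiG GSi unfolding Si_def G_def by auto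
qed

lemma suppl_formula:
  fixes Q S T :: "'a::cstar_algebra"
  assumes QQ: "Q * Q = Q"
    and sS: "adj S = S" and sT: "adj T = T" and TT: "T * T = S"
    and SS: "S * S = (Q + adj Q - 1) * (Q + adj Q - 1)"
    and comm: "\<And>x. x * (S * S) = (S * S) * x \<Longrightarrow> x * S = S * x \<and> x * T = T * x"
    and iT: "inv_el T" and iS1: "inv_el (S + 1)"
  shows "suppl Q = (1/2) *\<^sub>R (cinv S * cinv (S + 1) * FF S (cinv S) Q (adj Q))"
    and "range_proj Q = Q * adj Q * (cinv S * cinv S)"
proof -
  define Qs where "Qs = adj Q"
  define D where "D = S * S"
  define Si where "Si = cinv S"
  define G where "G = cinv (S + 1)"
  define P where "P = Q * Qs * (Si * Si)"
  have QsQs: "Qs * Qs = Qs" unfolding Qs_def using QQ by (metis adj_mult)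
  have iS: "inv_el S" using TT iT inv_el_mult by metis
  have Dexp: "D = Q * Qs + Qs * Q - Q - Qs + 1"
    unfolding D_def SS Qs_def[symmetric] using QQ QsQs by (simp add: algebra_simps)
  have QQ2: "\<And>x. Q * (Q * x) = Q * x" and QsQs2: "\<And>x. Qs * (Qs * x) = Qs * x"
    using QQ QsQs by (metis mult.assoc)+
  have DQ: "Q * D = D * Q" unfolding Dexp by (simp add: algebra_simps QQ QsQs QQ2 QsQs2)
  have DQs: "Qs * D = D * Qs" unfolding Dexp by (simp add: algebra_simps QQ QsQs QQ2 QsQs2)
  have cQ1: "Q * S = S * Q \<and> Q * T = T * Q" using comm DQ unfolding D_def by blast
  have cQs1: "Qs * S = S * Qs \<and> Qs * T = T * Qs" using comm DQs unfolding D_def by blast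
  have cQ: "Q * S = S * Q" "Q * Si = Si * Q" "Q * G = G * Q"
    using cQ1 cinv_comm[OF iS, of Q] cinv_comm[OF iS1, of Q] unfolding Si_def G_def by (auto simp: algebra_simps)
  have cQs: "Qs * S = S * Qs" "Qs * Si = Si * Qs" "Qs * G = G * Qs"
    using cQs1 cinv_comm[OF iS, of Qs] cinv_comm[OF iS1, of Qs] unfolding Si_def G_def by (auto simp: algebra_simps)
  note cr = central_rels[OF iS iS1, folded Si_def G_def]
  have ZQ: "Q * Qs = S * S - Qs * Q + Q + Qs - 1" using Dexp unfolding D_def by (simp add: algebra_simps)
  note AP = alg_P[OF cr cQ cQs QQ QsQs ZQ P_def]
  have sSi: "adj Si = Si" unfolding Si_def using cinv_adj[OF iS] sS by simp
  have sP: "adj P = P"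
  proof -
    have "adj P = Si * Si * (Q * Qs)" unfolding P_def Qs_def by (simp add: adj_mult adj_adj sSi[unfolded Qs_def] mult.assoc)
    also have "\<dots> = P" unfolding P_def using cQ cQs by (metis mult.assoc)
    finally show ?thesis .
  qed
  have projP: "projection P" unfolding projection_def using sP AP by simp
  have rp: "range_proj Q = P"
    unfolding range_proj_def
  proof (rule the_equality)
    show "projection P \<and> P * Q = Q \<and> Q * P = P" using projP AP by simp
  next
    fix p assume a: "projection p \<and> p * Q = Q \<and> Q * p = p"
    then have sp: "adj p = p" and pQ: "p * Q = Q" and Qp: "Q * p = p" unfolding projection_def by auto
    have "p * P = P" using pQ AP(3) by (metis mult.assoc)
    moreover have "P * p = p" using AP(2) Qp by (metis mult.assoc)
    ultimately show "p = P" using sp sP by (metis adj_mult)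
  qed
  then show "range_proj Q = Q * adj Q * (cinv S * cinv S)" unfolding P_def Qs_def Si_def .
  have PD: "P * D = D * P" unfolding D_def using AP(6) by (metis mult.assoc)
  have comm': "\<And>x. x * D = D * x \<Longrightarrow> x * S = S * x \<and> x * T = T * x" using comm unfolding D_def by blast
  have PP: "P * P = P" using AP by simp
  have ps: "psqrt (Q * Qs) = S * P"
    using psqrt_eq[OF sS sT TT D_def[symmetric] iT comm' sP PP PD] AP(9) unfolding D_def by simp
  define A where "A = 2 * P - Q"
  have A2: "A = P + P - Q" unfolding A_def by (simp add: mult_2)
  have sA: "adj A = P + P - Qs" unfolding A2 Qs_def using sP by (simp add: adj_add)
  have "adj (adj A) * adj A = A * adj A" by (simp only: adj_adj)
  also have "\<dots> = Q * Qs" unfolding sA unfolding A2 using AP(10) by simp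
  finally have "adj (adj A) * adj A = Q * Qs" .
  then have ab: "absv (adj A) = S * P" unfolding absv_def using ps by simp
  have mp: "mp_inv (S * P) = Si * P" unfolding Si_def by (rule mp_inv_SP[OF iS sS sP PP AP(6)])
  have ci: "cinv (S * P + 1) = G * P + (1 - P)" unfolding G_def by (rule cinv_SP1[OF iS1 PP AP(6)])
  have "suppl Q = matched A" unfolding suppl_def rp A_def ..
  also have "\<dots> = (1/2) *\<^sub>R ((S * P + (P + P - Qs)) * (Si * P) * (G * P + (1 - P)) * (S * P + (P + P - Q)))"
    unfolding matched_def ab mp ci unfolding sA by (simp add: A2)
  also have "(S * P + (P + P - Qs)) * (Si * P) * (G * P + (1 - P)) * (S * P + (P + P - Q))
       = Si * G * ((S + 1 + 1) * (S + 1 + 1) * P - (S + 1 + 1) * (Q + Qs) + Qs * Q)"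
    by (rule matched_core[OF cr AP(6-8) cQ cQs AP(1-5) QQ QsQs])
  finally show "suppl Q = (1/2) *\<^sub>R (cinv S * cinv (S + 1) * FF S (cinv S) Q (adj Q))"
    unfolding FF_def P_def Si_def G_def Qs_def .
qed

lemma normal_idem_proj:
  fixes Q :: "'a::cstar_algebra"
  assumes QQ: "Q * Q = Q" and N: "Q * adj Q = adj Q * Q"
  shows "projection Q"
proof -
  define Qs where "Qs = adj Q"
  have QsQs: "Qs * Qs = Qs" unfolding Qs_def using QQ by (metis adj_mult)
  have N': "Q * Qs = Qs * Q" using N unfolding Qs_def .
  have r: "\<And>x. Q * (Q * x) = Q * x" "\<And>x. Qs * (Qs * x) = Qs * x" "\<And>x. Q * (Qs * x) = Qs * (Q * x)"
    using QQ QsQs N' by (metis mult.assoc)+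
  define y where "y = Q - Qs * Q"
  have sQs: "adj Qs = Q" unfolding Qs_def by (rule adj_adj)
  have ay: "adj y = Qs - Qs * Q" unfolding y_def by (simp add: adj_mult sQs Qs_def[symmetric])
  have "adj y * y = 0" unfolding ay unfolding y_def
    by (simp add: algebra_simps r QQ QsQs N')
  then have "y = 0" by (rule cstar_zero)
  then have e: "Q = Qs * Q" unfolding y_def by simp
  then have "adj Q = adj (Qs * Q)" by simp
  also have "\<dots> = Qs * Q" unfolding Qs_def by (simp add: adj_mult adj_adj)
  finally show ?thesis unfolding projection_def using e QQ Qs_def by simp
qed

lemma half_two: "(1/2::real) *\<^sub>R (2::'a::cstar_algebra) = 1"
proof -
  have "(1/2::real) *\<^sub>R (2 * (1::'a)) = (2/2) *\<^sub>R 1" by (rule inverse_scaleR_times)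
  then show ?thesis by simp
qed

theorem proposition5p5:
  fixes Q :: "'a::cstar_algebra"
  assumes "idempotent Q"
  shows "suppl (1 - Q) = 1 - suppl (adj Q) \<and>
         ((suppl (1 - Q) = 1 - suppl Q \<longleftrightarrow> suppl (adj Q) = suppl Q) \<and>
          (suppl (adj Q) = suppl Q \<longleftrightarrow> projection Q) \<and>
          (projection Q \<longleftrightarrow> quasi_projection_pair (suppl Q) Q))"
proof -
  have QQ: "Q * Q = Q" using assms unfolding idempotent_def .
  define Qs where "Qs = adj Q"
  have QsQs: "Qs * Qs = Qs" unfolding Qs_def using QQ by (metis adj_mult)
  have sQs: "adj Qs = Q" unfolding Qs_def by (rule adj_adj)
  have QQ2: "\<And>x. Q * (Q * x) = Q * x" and QsQs2: "\<And>x. Qs * (Qs * x) = Qs * x"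
    using QQ QsQs by (metis mult.assoc)+
  define g where "g = cs (- \<i>) * (Q - Qs)"
  have sg: "adj g = g" unfolding g_def
    by (simp add: adj_mult sQs Qs_def[symmetric] cs_comm algebra_simps cs_uminus)
  have gg: "g * g = - ((Q - Qs) * (Q - Qs))"
  proof -
    have "g * g = cs (- \<i>) * cs (- \<i>) * ((Q - Qs) * (Q - Qs))"
      unfolding g_def by (metis cs_comm2 mult.assoc)
    also have "cs (- \<i>) * cs (- \<i>) = (- 1 :: 'a)"
      by (simp add: cs_uminus flip: cs_mult)
    finally show ?thesis by simp
  qed
  have W: "(Q + Qs - 1) * (Q + Qs - 1) = 1 + g * g"
    unfolding gg by (simp add: algebra_simps QQ QsQs)
  obtain S T where sS: "adj S = S" and sT: "adj T = T" and TT: "T * T = S" and SSg: "S * S = 1 + g * g"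
    and commg: "\<And>x. x * (g * g) = (g * g) * x \<Longrightarrow> x * S = S * x \<and> x * T = T * x"
    using sqrt_ex[OF sg] by blast
  have SS: "S * S = (Q + Qs - 1) * (Q + Qs - 1)" using SSg W by simp
  have comm: "\<And>x. x * (S * S) = (S * S) * x \<Longrightarrow> x * S = S * x \<and> x * T = T * x"
    using commg unfolding SSg by (simp add: algebra_simps)
  have iE: "inv_el (S * S)"
  proof -
    have "inv_el (of_real 1 + g * g)" by (rule spos_inv_plus[OF spos_square[OF sg]]) simp
    then show ?thesis unfolding SSg by simp
  qed
  have iT: "inv_el T"
  proof -
    define E where "E = S * S"
    have TE: "T * E = E * T" unfolding E_def TT[symmetric] by (simp add: mult.assoc)
    have cE: "cinv E * T = T * cinv E" using cinv_comm[OF iE[folded E_def] TE[symmetric]] by simp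
    have E4: "E = T * T * T * T" unfolding E_def TT[symmetric] by (simp add: mult.assoc)
    have ER: "E * cinv E = 1" using cinv_right[OF iE[folded E_def]] .
    have "T * (T * T * T * cinv E) = (T * T * T * T) * cinv E" by (simp add: mult.assoc)
    then have a: "T * (T * T * T * cinv E) = 1" using ER E4 by simp
    have "(T * T * T * cinv E) * T = T * T * T * (cinv E * T)" by (simp add: mult.assoc)
    also have "\<dots> = (T * T * T * T) * cinv E" unfolding cE by (simp add: mult.assoc)
    finally have b: "(T * T * T * cinv E) * T = 1" using ER E4 by simp
    show ?thesis using a b by (rule inv_elI)
  qed
  have iS: "inv_el S" using TT iT inv_el_mult by metis
  have iS1: "inv_el (S + 1)"
  proof -
    have "spos S" using spos_square[OF sT] TT by simp
    then have "inv_el (of_real 1 + S)" by (rule spos_inv_plus) simp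
    then show ?thesis by (simp add: add.commute)
  qed
  define Si where "Si = cinv S"
  define G where "G = cinv (S + 1)"
  note cr = central_rels[OF iS iS1, folded Si_def G_def]
  have sf1: "suppl Q = (1/2) *\<^sub>R (Si * G * FF S Si Q Qs)"
    using suppl_formula(1)[OF QQ sS sT TT SS[unfolded Qs_def] comm iT iS1] unfolding Si_def G_def Qs_def .
  have SS2: "S * S = (Qs + adj Qs - 1) * (Qs + adj Qs - 1)" unfolding SS sQs by (simp add: add.commute)
  have sf2: "suppl Qs = (1/2) *\<^sub>R (Si * G * FF S Si Qs Q)"
    using suppl_formula(1)[OF QsQs sS sT TT SS2 comm iT iS1] unfolding Si_def G_def sQs .
  have QQ1: "(1 - Q) * (1 - Q) = 1 - Q" using QQ by (simp add: algebra_simps)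
  have SS3: "S * S = ((1 - Q) + adj (1 - Q) - 1) * ((1 - Q) + adj (1 - Q) - 1)"
    unfolding SS Qs_def by (simp add: algebra_simps del: one_add_one numeral_plus_one one_plus_numeral numeral_plus_numeral add_numeral_left)
  have sf3: "suppl (1 - Q) = (1/2) *\<^sub>R (Si * G * FF S Si (1 - Q) (1 - Qs))"
    using suppl_formula(1)[OF QQ1 sS sT TT SS3 comm iT iS1] unfolding Si_def G_def Qs_def by simp
  have Dexp: "S * S = Q * Qs + Qs * Q - Q - Qs + 1"
    unfolding SS using QQ QsQs by (simp add: algebra_simps)
  have DQ: "Q * (S * S) = (S * S) * Q" unfolding Dexp by (simp add: algebra_simps QQ QsQs QQ2 QsQs2)
  have DQs: "Qs * (S * S) = (S * S) * Qs" unfolding Dexp by (simp add: algebra_simps QQ QsQs QQ2 QsQs2)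
  have cQ1: "Q * S = S * Q" using comm DQ by blast
  have cQs1: "Qs * S = S * Qs" using comm DQs by blast
  have cQ: "Q * S = S * Q" "Q * Si = Si * Q" "Q * G = G * Q"
    using cQ1 cinv_comm[OF iS, of Q] cinv_comm[OF iS1, of Q] unfolding Si_def G_def by (auto simp: algebra_simps)
  have cQs: "Qs * S = S * Qs" "Qs * Si = Si * Qs" "Qs * G = G * Qs"
    using cQs1 cinv_comm[OF iS, of Qs] cinv_comm[OF iS1, of Qs] unfolding Si_def G_def by (auto simp: algebra_simps)
  have ZQ: "Q * Qs = S * S - Qs * Q + Q + Qs - 1" using Dexp by (simp add: algebra_simps)
  note AA = alg_all[OF cr cQ cQs QQ QsQs ZQ]
  define P where "P = Q * Qs * (Si * Si)"
  note AP = alg_P[OF cr cQ cQs QQ QsQs ZQ P_def]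
  have part1: "suppl (1 - Q) = 1 - suppl Qs"
  proof -
    have "suppl (1 - Q) + suppl Qs = (1/2) *\<^sub>R (Si * G * FF S Si (1 - Q) (1 - Qs) + Si * G * FF S Si Qs Q)"
      unfolding sf2 sf3 by (simp add: scaleR_add_right)
    also have "\<dots> = 1" unfolding AA(1) by (simp add: half_two)
    finally show ?thesis by (simp add: eq_diff_eq)
  qed
  have part2: "suppl (1 - Q) = 1 - suppl Q \<longleftrightarrow> suppl Qs = suppl Q"
    unfolding part1 by auto
  have part3: "suppl Qs = suppl Q \<longleftrightarrow> projection Q"
  proof
    assume e: "suppl Qs = suppl Q"
    have "(1/2) *\<^sub>R (Si * G * FF S Si Q Qs - Si * G * FF S Si Qs Q) = suppl Q - suppl Qs"
      unfolding sf1 sf2 by (simp add: scaleR_diff_right)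
    also have "\<dots> = 0" using e by simp
    finally have "(1 + 1 + 1 + 1) * (Si * Si * Si * (Q * Qs - Qs * Q)) = 0"
      unfolding AA(2) by simp
    then have h: "(4::'a) * (Si * Si * Si * (Q * Qs - Qs * Q)) = 0" by simp
    have "Si * Si * Si * (Q * Qs - Qs * Q) = (1/4) *\<^sub>R ((4::'a) * (Si * Si * Si * (Q * Qs - Qs * Q)))"
      by simp
    then have z: "Si * Si * Si * (Q * Qs - Qs * Q) = 0" using h by simp
    have "Q * Qs - Qs * Q = S * (S * (S * (Si * Si * Si * (Q * Qs - Qs * Q))))"
      using cr(1) by (simp add: mult.assoc[symmetric])
    then have "Q * Qs = Qs * Q" using z by simp
    then show "projection Q" using normal_idem_proj[OF QQ] unfolding Qs_def by simp
  next
    assume "projection Q"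
    then have "Qs = Q" unfolding projection_def Qs_def by simp
    then show "suppl Qs = suppl Q" by simp
  qed
  have part4: "projection Q \<longleftrightarrow> quasi_projection_pair (suppl Q) Q"
  proof
    assume pQ: "projection Q"
    then have QsQ: "Qs = Q" unfolding projection_def Qs_def by simp
    have "S * S = 1" unfolding SS QsQ using QQ by (simp add: algebra_simps)
    then have "(S - 1) * (S + 1) = 0" by (simp add: algebra_simps)
    then have "S - 1 = 0" using cinv_right[OF iS1] by (metis mult.assoc mult_1_right mult_zero_left)
    then have S1: "S = 1" by simp
    then have Si1: "Si = 1" unfolding Si_def by simp
    have G2: "G * (1 + 1) = 1" unfolding G_def using cinv_left[OF iS1] S1 by simp
    have FF4: "FF S Si Q Qs = (1 + 1) * ((1 + 1) * Q)"
      unfolding FF_def S1 Si1 QsQ using QQ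
      by (simp add: algebra_simps del: one_add_one numeral_plus_one one_plus_numeral numeral_plus_numeral add_numeral_left)
    have "Si * G * FF S Si Q Qs = (G * (1 + 1)) * ((1 + 1) * Q)"
      unfolding FF4 by (simp only: Si1 mult_1_left mult.assoc)
    then have "Si * G * FF S Si Q Qs = (1 + 1) * Q" by (simp only: G2 mult_1_left)
    then have sQ: "suppl Q = Q" unfolding sf1 by (simp add: algebra_simps scaleR_add_right[symmetric] del: scaleR_add_right)
    show "quasi_projection_pair (suppl Q) Q"
      unfolding quasi_projection_pair_def sQ idempotent_def
      using pQ QQ QsQ unfolding Qs_def projection_def by (simp add: algebra_simps mult_2)
  next
    assume qp: "quasi_projection_pair (suppl Q) Q"
    then have e: "Qs = (2 * suppl Q - 1) * Q * (2 * suppl Q - 1)"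
      unfolding quasi_projection_pair_def Qs_def by simp
    define u where "u = Si * G * FF S Si Q Qs - 1"
    have "2 * suppl Q = Si * G * FF S Si Q Qs" unfolding sf1
      by (simp add: mult_2 scaleR_add_right[symmetric] del: scaleR_add_right)
    then have eu: "Qs = u * Q * u" using e unfolding u_def by simp
    have Pu: "P * u * Q = Si * Q" unfolding u_def P_def by (rule AA(3))
    have uP: "Q * u * P = (Si + Si - S) * P" unfolding u_def P_def by (rule AA(4))
    have "P * Qs * P = P * u * (Q * Q) * u * P" unfolding eu QQ by (simp add: mult.assoc)
    also have "\<dots> = (P * u * Q) * (Q * u * P)" by (simp add: mult.assoc)
    finally have "P * Qs * P = (P * u * Q) * (Q * u * P)" .
    also have "\<dots> = Si * Q * ((Si + Si - S) * P)" unfolding Pu uP ..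
    also have "\<dots> = Si * (Si + Si - S) * (Q * P)"
    proof -
      have "Q * (Si + Si - S) = (Si + Si - S) * Q" using cQ by (simp add: algebra_simps)
      then show ?thesis by (metis mult.assoc)
    qed
    also have "\<dots> = (Si * Si + Si * Si - Si * S) * P" unfolding AP(3) by (simp add: algebra_simps)
    also have "\<dots> = (Si * Si + Si * Si - 1) * P" unfolding cr(2) ..
    finally have e1: "P * Qs * P = (Si * Si + Si * Si - 1) * P" .
    have "P * Qs * P = P" using AP(5) AP(1) by simp
    with e1 have "(Si * Si + Si * Si) * P = P + P" by (simp add: algebra_simps)
    then have "S * S * ((Si * Si + Si * Si) * P) = S * S * (P + P)" by simp
    moreover have "S * S * ((Si * Si + Si * Si) * P) = P + P"
    proof -
      have r1: "S * (Si * x) = x" for x using cr(1) by (metis mult.assoc mult_1_left)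
      have "S * S * ((Si * Si + Si * Si) * P) = S * (S * (Si * (Si * P))) + S * (S * (Si * (Si * P)))"
        by (simp add: distrib_left distrib_right mult.assoc)
      also have "\<dots> = P + P" by (simp only: r1)
      finally show ?thesis .
    qed
    ultimately have "P + P = S * S * P + S * S * P" by (simp add: distrib_left)
    then have "scaleR 2 P = scaleR 2 (S * S * P)" by (simp add: scaleR_2)
    then have "P = S * S * P" by simp
    then have ZP: "Q * Qs = P" using AP(9) by simp
    define N where "N = Q - P"
    have sP: "adj P = P"
    proof -
      have "adj P = adj (Q * Qs)" unfolding ZP ..
      also have "\<dots> = Q * Qs" by (simp add: adj_mult sQs Qs_def[symmetric])
      finally show ?thesis using ZP by simp
    qed
    have "N * adj N = 0" unfolding N_def using ZP AP(1,3,5) sP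
      by (simp add: algebra_simps Qs_def[symmetric])
    then have "N = 0" by (rule cstar_zero')
    then have QP: "Q = P" unfolding N_def by simp
    show "projection Q" unfolding projection_def using QQ sP QP by simp
  qed
  show ?thesis using part1 part2 part3 part4 unfolding Qs_def by blast
qed

end
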